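(* Provably in $\mathsf{GB}^{+\infty}$, and also provably in $\mathsf{GB}^{-\infty}$: the class defined by $\mathsf{T}_{\mathsf{Most}}(x)$ is an $F$-truth class over $(V,\in)$ for $F=\mathsf{Depth}_{\mathsf{Most}}$.
   Context: $\mathsf{GB}$ is Gödel–Bernays class theory; $\mathsf{GB}^{+\infty}=\mathsf{GB}$; $\mathsf{GB}^{-\infty}=\mathsf{GB}_{\mathsf{fin}}+\mathsf{TC}$, where $\mathsf{GB}_{\mathsf{fin}}$ replaces the axiom of infinity in $\mathsf{GB}$ by its negation and $\mathsf{TC}$ says every set has a transitive closure. $\omega$ is the class of finite ordinals. Reasoning in these theories: $V$ is the class of all sets; $c_a$ is a constant naming the set $a$; $\mathcal{L}^+_{\mathsf{ZF}}$-sentences are codes of $\varphi(c_{a_1},\dots,c_{a_n})$ with $\varphi$ an internal $\mathcal{L}_{\mathsf{ZF}}$-formula. $\mathsf{depth}(\varphi)$ is the length of the longest path in the parsing tree of $\varphi$ (the depth of $\varphi(c_{a_1},\dots)$ is that of $\varphi$); $\mathsf{Depth}_k$ is the set of $\mathcal{L}_{\mathsf{ZF}}$-formulas of depth $\le k$. For a collection $F$ of $\mathcal{L}_{\mathsf{ZF}}$-formulas closed under immediate subformulas, with $\mathsf{FSent}$ the sentences obtained by substituting constants $c_a$ for the free variables of formulas in $F$, a class $T$ is an $F$-truth class over $(V,\in)$ if: (1) $T\subseteq\mathsf{FSent}$; (2) $\ulcorner c_a=c_b\urcorner\in T\leftrightarrow a=b$ and $\ulcorner c_a\in c_b\urcorner\in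 T\leftrightarrow a\in b$; (3) for $\neg\psi\in\mathsf{FSent}$: $\neg\psi\in T\leftrightarrow\psi\notin T$; (4) for $\psi_1\vee\psi_2\in\mathsf{FSent}$: $(\psi_1\vee\psi_2)\in T\leftrightarrow(\psi_1\in T\vee\psi_2\in T)$; (5) for $\exists v\,\psi(v)\in\mathsf{FSent}$: $\exists v\,\psi(v)\in T\leftrightarrow\exists x\,\psi(c_x)\in T$. $\mathsf{C}_{\mathsf{Most}}$ is the class of $k\in\omega$ for which some class is a $\mathsf{Depth}_k$-truth class over $(V,\in)$; $\mathsf{Depth}_{\mathsf{Most}}$ is the class of $\mathcal{L}_{\mathsf{ZF}}$-formulas $\varphi$ with $\mathsf{depth}(\varphi)\in\mathsf{C}_{\mathsf{Most}}$. $\mathsf{T}_{\mathsf{Most}}(x)$ expresses: $x$ is (the code of) an $\mathcal{L}^+_{\mathsf{ZF}}$-sentence $\varphi(c_{a_1},\dots,c_{a_n})$ and there exist $p\ge\mathsf{depth}(\varphi)$ and a class $T$ such that $\varphi(c_{a_1},\dots,c_{a_n})\in T$ and $T$ is a $\mathsf{Depth}_p$-truth class over $(V,\in)$. *)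

theory Defs
  imports Main
begin

text \<open>Semantic rendering of provability in GB-style class theories: a two-sorted
  (Henkin) model is given by a membership relation e on the type 'a of sets and
  a collection Cl of classes (HOL sets of sets).  All syntax (codes of formulas,
  depth, substitution, internal natural numbers) is coded INSIDE the model.\<close>

definition m_empty :: "('a \<Rightarrow> 'a \<Rightarrow> bool) \<Rightarrow> 'a \<Rightarrow> bool" where
  "m_empty e x \<equiv> \<forall>z. \<not> e z x"

definition m_upair :: "('a \<Rightarrow> 'a \<Rightarrow> bool) \<Rightarrow> 'a \<Rightarrow> 'a \<Rightarrow> 'a \<Rightarrow> bool" where
  "m_upair e p a b \<equiv> \<forall>z. e z p \<longleftrightarrow> z = a \<or> z = b"

definition m_pair :: "('a \<Rightarrow> 'a \<Rightarrow> bool) \<Rightarrow> 'a \<Rightarrow> 'a \<Rightarrow> 'a \<Rightarrow> bool" where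
  "m_pair e p a b \<equiv> \<exists>u w. m_upair e u a a \<and> m_upair e w a b \<and> m_upair e p u w"

definition m_succ :: "('a \<Rightarrow> 'a \<Rightarrow> bool) \<Rightarrow> 'a \<Rightarrow> 'a \<Rightarrow> bool" where
  "m_succ e y x \<equiv> \<forall>z. e z y \<longleftrightarrow> e z x \<or> z = x"

definition m_union2 :: "('a \<Rightarrow> 'a \<Rightarrow> bool) \<Rightarrow> 'a \<Rightarrow> 'a \<Rightarrow> 'a \<Rightarrow> bool" where
  "m_union2 e u x y \<equiv> \<forall>z. e z u \<longleftrightarrow> e z x \<or> e z y"

definition m_transitive :: "('a \<Rightarrow> 'a \<Rightarrow> bool) \<Rightarrow> 'a \<Rightarrow> bool" where
  "m_transitive e x \<equiv> \<forall>y z. e z y \<and> e y x \<longrightarrow> e z x"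

definition m_ord :: "('a \<Rightarrow> 'a \<Rightarrow> bool) \<Rightarrow> 'a \<Rightarrow> bool" where
  "m_ord e x \<equiv> m_transitive e x \<and> (\<forall>y. e y x \<longrightarrow> m_transitive e y)"

definition m_nat :: "('a \<Rightarrow> 'a \<Rightarrow> bool) \<Rightarrow> 'a \<Rightarrow> bool" where
  "m_nat e n \<equiv> m_ord e n \<and>
     (\<forall>m. (m = n \<or> e m n) \<longrightarrow> m_empty e m \<or> (\<exists>k. m_succ e m k))"

definition m_le :: "('a \<Rightarrow> 'a \<Rightarrow> bool) \<Rightarrow> 'a \<Rightarrow> 'a \<Rightarrow> bool" where
  "m_le e m n \<equiv> m = n \<or> e m n"

text \<open>Standard numerals (used only as syntactic tags).\<close>
fun m_num :: "('a \<Rightarrow> 'a \<Rightarrow> bool) \<Rightarrow> nat \<Rightarrow> 'a \<Rightarrow> bool" where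
  "m_num e 0 x = m_empty e x"
| "m_num e (Suc k) x = (\<exists>y. m_num e k y \<and> m_succ e x y)"

definition m_tag :: "('a \<Rightarrow> 'a \<Rightarrow> bool) \<Rightarrow> nat \<Rightarrow> 'a \<Rightarrow> 'a \<Rightarrow> bool" where
  "m_tag e k p a \<equiv> \<exists>t. m_num e k t \<and> m_pair e p t a"

definition m_tag2 :: "('a \<Rightarrow> 'a \<Rightarrow> bool) \<Rightarrow> nat \<Rightarrow> 'a \<Rightarrow> 'a \<Rightarrow> 'a \<Rightarrow> bool" where
  "m_tag2 e k p a b \<equiv> \<exists>q. m_pair e q a b \<and> m_tag e k p q"

text \<open>variable v_i: <0,i>; constant c_a: <1,a>; (t1 = t2): <2,<t1,t2>>;
  (t1 \<in> t2): <3,<t1,t2>>; neg phi: <4,phi>; (phi or psi): <5,<phi,psi>>;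
  (exists v_i phi): <6,<i,phi>>.\<close>

definition isVar :: "('a \<Rightarrow> 'a \<Rightarrow> bool) \<Rightarrow> 'a \<Rightarrow> 'a \<Rightarrow> bool" where
  "isVar e t i \<equiv> m_nat e i \<and> m_tag e 0 t i"

definition isConst :: "('a \<Rightarrow> 'a \<Rightarrow> bool) \<Rightarrow> 'a \<Rightarrow> 'a \<Rightarrow> bool" where
  "isConst e t a \<equiv> m_tag e 1 t a"

definition isTerm :: "('a \<Rightarrow> 'a \<Rightarrow> bool) \<Rightarrow> 'a \<Rightarrow> bool" where
  "isTerm e t \<equiv> (\<exists>i. isVar e t i) \<or> (\<exists>a. isConst e t a)"

definition isEqF :: "('a \<Rightarrow> 'a \<Rightarrow> bool) \<Rightarrow> 'a \<Rightarrow> 'a \<Rightarrow> 'a \<Rightarrow> bool" where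
  "isEqF e p t1 t2 \<equiv> isTerm e t1 \<and> isTerm e t2 \<and> m_tag2 e 2 p t1 t2"

definition isMemF :: "('a \<Rightarrow> 'a \<Rightarrow> bool) \<Rightarrow> 'a \<Rightarrow> 'a \<Rightarrow> 'a \<Rightarrow> bool" where
  "isMemF e p t1 t2 \<equiv> isTerm e t1 \<and> isTerm e t2 \<and> m_tag2 e 3 p t1 t2"

definition isNeg :: "('a \<Rightarrow> 'a \<Rightarrow> bool) \<Rightarrow> 'a \<Rightarrow> 'a \<Rightarrow> bool" where
  "isNeg e p \<phi> \<equiv> m_tag e 4 p \<phi>"

definition isOr :: "('a \<Rightarrow> 'a \<Rightarrow> bool) \<Rightarrow> 'a \<Rightarrow> 'a \<Rightarrow> 'a \<Rightarrow> bool" where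
  "isOr e p \<phi> \<psi> \<equiv> m_tag2 e 5 p \<phi> \<psi>"

definition isEx :: "('a \<Rightarrow> 'a \<Rightarrow> bool) \<Rightarrow> 'a \<Rightarrow> 'a \<Rightarrow> 'a \<Rightarrow> bool" where
  "isEx e p i \<phi> \<equiv> m_nat e i \<and> m_tag2 e 6 p i \<phi>"

definition form_closed ::
  "('a \<Rightarrow> 'a \<Rightarrow> bool) \<Rightarrow> ('a \<Rightarrow> bool) \<Rightarrow> 'a \<Rightarrow> bool" where
  "form_closed e tm S \<equiv> \<forall>\<chi>. e \<chi> S \<longrightarrow>
      (\<exists>t1 t2. (isEqF e \<chi> t1 t2 \<or> isMemF e \<chi> t1 t2) \<and> tm t1 \<and> tm t2)
    \<or> (\<exists>\<theta>. isNeg e \<chi> \<theta> \<and> e \<theta> S)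
    \<or> (\<exists>\<theta>1 \<theta>2. isOr e \<chi> \<theta>1 \<theta>2 \<and> e \<theta>1 S \<and> e \<theta>2 S)
    \<or> (\<exists>i \<theta>. isEx e \<chi> i \<theta> \<and> e \<theta> S)"

definition LPformula :: "('a \<Rightarrow> 'a \<Rightarrow> bool) \<Rightarrow> 'a \<Rightarrow> bool" where
  "LPformula e x \<equiv> \<exists>S. e x S \<and> form_closed e (isTerm e) S"

definition LZFformula :: "('a \<Rightarrow> 'a \<Rightarrow> bool) \<Rightarrow> 'a \<Rightarrow> bool" where
  "LZFformula e x \<equiv> \<exists>S. e x S \<and> form_closed e (\<lambda>t. \<exists>i. isVar e t i) S"

definition inRel2 :: "('a \<Rightarrow> 'a \<Rightarrow> bool) \<Rightarrow> 'a \<Rightarrow> 'a \<Rightarrow> 'a \<Rightarrow> bool" where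
  "inRel2 e R a b \<equiv> \<exists>q. m_pair e q a b \<and> e q R"

text \<open>Depth = length of the longest path in the parsing tree (atoms: 0).\<close>
definition depth_closed :: "('a \<Rightarrow> 'a \<Rightarrow> bool) \<Rightarrow> 'a \<Rightarrow> bool" where
  "depth_closed e R \<equiv> \<forall>q. e q R \<longrightarrow> (\<exists>\<chi> d. m_pair e q \<chi> d \<and> m_nat e d \<and>
      ((\<exists>t1 t2. (isEqF e \<chi> t1 t2 \<or> isMemF e \<chi> t1 t2)) \<and> m_empty e d
     \<or> (\<exists>\<theta> d'. isNeg e \<chi> \<theta> \<and> inRel2 e R \<theta> d' \<and> m_succ e d d')
     \<or> (\<exists>\<theta>1 \<theta>2 d1 d2 u. isOr e \<chi> \<theta>1 \<theta>2 \<and> inRel2 e R \<theta>1 d1 \<and> inRel2 e R \<theta>2 d2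
            \<and> m_union2 e u d1 d2 \<and> m_succ e d u)
     \<or> (\<exists>i \<theta> d'. isEx e \<chi> i \<theta> \<and> inRel2 e R \<theta> d' \<and> m_succ e d d')))"

definition hasDepth :: "('a \<Rightarrow> 'a \<Rightarrow> bool) \<Rightarrow> 'a \<Rightarrow> 'a \<Rightarrow> bool" where
  "hasDepth e x d \<equiv> \<exists>R. depth_closed e R \<and> inRel2 e R x d"

definition isAssign :: "('a \<Rightarrow> 'a \<Rightarrow> bool) \<Rightarrow> 'a \<Rightarrow> bool" where
  "isAssign e g \<equiv> (\<forall>p. e p g \<longrightarrow> (\<exists>i a. m_nat e i \<and> m_pair e p i a)) \<and>
     (\<forall>i a b p q. m_pair e p i a \<and> m_pair e q i b \<and> e p g \<and> e q g \<longrightarrow> a = b)"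

definition isSingAssign :: "('a \<Rightarrow> 'a \<Rightarrow> bool) \<Rightarrow> 'a \<Rightarrow> 'a \<Rightarrow> 'a \<Rightarrow> bool" where
  "isSingAssign e g i a \<equiv> \<forall>p. e p g \<longleftrightarrow> m_pair e p i a"

definition m_remove :: "('a \<Rightarrow> 'a \<Rightarrow> bool) \<Rightarrow> 'a \<Rightarrow> 'a \<Rightarrow> 'a \<Rightarrow> bool" where
  "m_remove e g' g j \<equiv> \<forall>p. e p g' \<longleftrightarrow> e p g \<and> \<not> (\<exists>b. m_pair e p j b)"

definition tsubst :: "('a \<Rightarrow> 'a \<Rightarrow> bool) \<Rightarrow> 'a \<Rightarrow> 'a \<Rightarrow> 'a \<Rightarrow> bool" where
  "tsubst e g t t' \<equiv>
     (\<exists>i a p. isVar e t i \<and> m_pair e p i a \<and> e p g \<and> isConst e t' a)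
   \<or> (isTerm e t \<and> \<not> (\<exists>i a p. isVar e t i \<and> m_pair e p i a \<and> e p g) \<and> t' = t)"

definition m_triple :: "('a \<Rightarrow> 'a \<Rightarrow> bool) \<Rightarrow> 'a \<Rightarrow> 'a \<Rightarrow> 'a \<Rightarrow> 'a \<Rightarrow> bool" where
  "m_triple e q g x y \<equiv> \<exists>r. m_pair e r x y \<and> m_pair e q g r"

definition inRel3 :: "('a \<Rightarrow> 'a \<Rightarrow> bool) \<Rightarrow> 'a \<Rightarrow> 'a \<Rightarrow> 'a \<Rightarrow> 'a \<Rightarrow> bool" where
  "inRel3 e R g x y \<equiv> \<exists>q. m_triple e q g x y \<and> e q R"

text \<open>Simultaneous substitution of constants c_(g i) for the free variables v_i
  (i in dom g).\<close>
definition subst_closed :: "('a \<Rightarrow> 'a \<Rightarrow> bool) \<Rightarrow> 'a \<Rightarrow> bool" where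
  "subst_closed e R \<equiv> \<forall>q. e q R \<longrightarrow> (\<exists>g \<chi> \<chi>'. m_triple e q g \<chi> \<chi>' \<and> isAssign e g \<and>
      ((\<exists>t1 t2 s1 s2. isEqF e \<chi> t1 t2 \<and> tsubst e g t1 s1 \<and> tsubst e g t2 s2 \<and> isEqF e \<chi>' s1 s2)
     \<or> (\<exists>t1 t2 s1 s2. isMemF e \<chi> t1 t2 \<and> tsubst e g t1 s1 \<and> tsubst e g t2 s2 \<and> isMemF e \<chi>' s1 s2)
     \<or> (\<exists>\<theta> \<theta>'. isNeg e \<chi> \<theta> \<and> isNeg e \<chi>' \<theta>' \<and> inRel3 e R g \<theta> \<theta>')
     \<or> (\<exists>\<theta>1 \<theta>2 \<theta>1' \<theta>2'. isOr e \<chi> \<theta>1 \<theta>2 \<and> isOr e \<chi>' \<theta>1' \<theta>2'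
            \<and> inRel3 e R g \<theta>1 \<theta>1' \<and> inRel3 e R g \<theta>2 \<theta>2')
     \<or> (\<exists>i \<theta> \<theta>' g'. isEx e \<chi> i \<theta> \<and> isEx e \<chi>' i \<theta>' \<and> m_remove e g' g i
            \<and> inRel3 e R g' \<theta> \<theta>')))"

definition ssubst :: "('a \<Rightarrow> 'a \<Rightarrow> bool) \<Rightarrow> 'a \<Rightarrow> 'a \<Rightarrow> 'a \<Rightarrow> bool" where
  "ssubst e g x y \<equiv> \<exists>R. subst_closed e R \<and> inRel3 e R g x y"

definition notfree_closed :: "('a \<Rightarrow> 'a \<Rightarrow> bool) \<Rightarrow> 'a \<Rightarrow> 'a \<Rightarrow> bool" where
  "notfree_closed e i N \<equiv> \<forall>\<chi>. e \<chi> N \<longrightarrow>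
      (\<exists>t1 t2. (isEqF e \<chi> t1 t2 \<or> isMemF e \<chi> t1 t2) \<and> \<not> isVar e t1 i \<and> \<not> isVar e t2 i)
    \<or> (\<exists>\<theta>. isNeg e \<chi> \<theta> \<and> e \<theta> N)
    \<or> (\<exists>\<theta>1 \<theta>2. isOr e \<chi> \<theta>1 \<theta>2 \<and> e \<theta>1 N \<and> e \<theta>2 N)
    \<or> (\<exists>j \<theta>. isEx e \<chi> j \<theta> \<and> ((j = i \<and> LPformula e \<theta>) \<or> e \<theta> N))"

definition notFree :: "('a \<Rightarrow> 'a \<Rightarrow> bool) \<Rightarrow> 'a \<Rightarrow> 'a \<Rightarrow> bool" where
  "notFree e i x \<equiv> \<exists>N. e x N \<and> notfree_closed e i N"

definition LPclosed :: "('a \<Rightarrow> 'a \<Rightarrow> bool) \<Rightarrow> 'a \<Rightarrow> bool" where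
  "LPclosed e x \<equiv> LPformula e x \<and> (\<forall>i. m_nat e i \<longrightarrow> notFree e i x)"

definition FSent :: "('a \<Rightarrow> 'a \<Rightarrow> bool) \<Rightarrow> 'a set \<Rightarrow> 'a set" where
  "FSent e F \<equiv> {x. LPclosed e x \<and>
     (\<exists>\<phi> g. \<phi> \<in> F \<and> LZFformula e \<phi> \<and> isAssign e g \<and> ssubst e g \<phi> x)}"

definition LPsentence :: "('a \<Rightarrow> 'a \<Rightarrow> bool) \<Rightarrow> 'a set" where
  "LPsentence e \<equiv> FSent e {\<phi>. LZFformula e \<phi>}"

definition truth_class :: "('a \<Rightarrow> 'a \<Rightarrow> bool) \<Rightarrow> 'a set \<Rightarrow> 'a set \<Rightarrow> bool" where
  "truth_class e F T \<equiv>
     T \<subseteq> FSent e F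
   \<and> (\<forall>a b p ta tb. isConst e ta a \<and> isConst e tb b \<and> isEqF e p ta tb \<longrightarrow> (p \<in> T \<longleftrightarrow> a = b))
   \<and> (\<forall>a b p ta tb. isConst e ta a \<and> isConst e tb b \<and> isMemF e p ta tb \<longrightarrow> (p \<in> T \<longleftrightarrow> e a b))
   \<and> (\<forall>x \<psi>. x \<in> FSent e F \<and> isNeg e x \<psi> \<longrightarrow> (x \<in> T \<longleftrightarrow> \<psi> \<notin> T))
   \<and> (\<forall>x \<psi>1 \<psi>2. x \<in> FSent e F \<and> isOr e x \<psi>1 \<psi>2 \<longrightarrow> (x \<in> T \<longleftrightarrow> \<psi>1 \<in> T \<or> \<psi>2 \<in> T))
   \<and> (\<forall>x i \<psi>. x \<in> FSent e F \<and> isEx e x i \<psi> \<longrightarrow>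
        (x \<in> T \<longleftrightarrow> (\<exists>a g y. isSingAssign e g i a \<and> ssubst e g \<psi> y \<and> y \<in> T)))"

definition DepthF :: "('a \<Rightarrow> 'a \<Rightarrow> bool) \<Rightarrow> 'a \<Rightarrow> 'a set" where
  "DepthF e k \<equiv> {\<phi>. LZFformula e \<phi> \<and> (\<exists>d. hasDepth e \<phi> d \<and> m_le e d k)}"

definition C_Most :: "('a \<Rightarrow> 'a \<Rightarrow> bool) \<Rightarrow> 'a set set \<Rightarrow> 'a set" where
  "C_Most e Cl \<equiv> {k. m_nat e k \<and> (\<exists>T\<in>Cl. truth_class e (DepthF e k) T)}"

definition Depth_Most :: "('a \<Rightarrow> 'a \<Rightarrow> bool) \<Rightarrow> 'a set set \<Rightarrow> 'a set" where
  "Depth_Most e Cl \<equiv> {\<phi>. LZFformula e \<phi> \<and> (\<exists>d. hasDepth e \<phi> d \<and> d \<in> C_Most e Cl)}"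

definition T_Most :: "('a \<Rightarrow> 'a \<Rightarrow> bool) \<Rightarrow> 'a set set \<Rightarrow> 'a \<Rightarrow> bool" where
  "T_Most e Cl x \<equiv> x \<in> LPsentence e \<and>
     (\<exists>\<phi> g d p T. LZFformula e \<phi> \<and> isAssign e g \<and> ssubst e g \<phi> x \<and>
        hasDepth e \<phi> d \<and> m_nat e p \<and> m_le e d p \<and>
        T \<in> Cl \<and> x \<in> T \<and> truth_class e (DepthF e p) T)"

text \<open>Formulas of the class language with set variables (nat-indexed) and
  class parameters; only set quantifiers (predicative comprehension).\<close>
datatype cform = CMem nat nat | CEq nat nat | CIn nat nat | CNeg cform
  | COr cform cform | CEx nat cform

fun csat :: "('a \<Rightarrow> 'a \<Rightarrow> bool) \<Rightarrow> (nat \<Rightarrow> 'a) \<Rightarrow> (nat \<Rightarrow> 'a set) \<Rightarrow> cform \<Rightarrow> bool" where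
  "csat e s c (CMem i j) = e (s i) (s j)"
| "csat e s c (CEq i j) = (s i = s j)"
| "csat e s c (CIn i k) = (s i \<in> c k)"
| "csat e s c (CNeg \<phi>) = (\<not> csat e s c \<phi>)"
| "csat e s c (COr \<phi> \<psi>) = (csat e s c \<phi> \<or> csat e s c \<psi>)"
| "csat e s c (CEx i \<phi>) = (\<exists>x. csat e (s(i := x)) c \<phi>)"

definition GB_common :: "('a \<Rightarrow> 'a \<Rightarrow> bool) \<Rightarrow> 'a set set \<Rightarrow> bool" where
  "GB_common e Cl \<equiv>
     (\<forall>x y. (\<forall>z. e z x \<longleftrightarrow> e z y) \<longrightarrow> x = y)
   \<and> (\<forall>x. {z. e z x} \<in> Cl)
   \<and> (\<forall>\<phi> s c. (\<forall>k. c k \<in> Cl) \<longrightarrow> {x. csat e (s(0 := x)) c \<phi>} \<in> Cl)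
   \<and> (\<forall>a b. \<exists>p. m_upair e p a b)
   \<and> (\<forall>x. \<exists>u. \<forall>z. e z u \<longleftrightarrow> (\<exists>y. e y x \<and> e z y))
   \<and> (\<forall>x. \<exists>p. \<forall>z. e z p \<longleftrightarrow> (\<forall>w. e w z \<longrightarrow> e w x))
   \<and> (\<forall>A\<in>Cl. \<forall>x. \<exists>y. \<forall>z. e z y \<longleftrightarrow> e z x \<and> z \<in> A)
   \<and> (\<forall>A\<in>Cl. (\<forall>x y y' p p'. m_pair e p x y \<and> m_pair e p' x y' \<and> p \<in> A \<and> p' \<in> A \<longrightarrow> y = y')
        \<longrightarrow> (\<forall>u. \<exists>w. \<forall>y. e y w \<longleftrightarrow> (\<exists>x p. e x u \<and> m_pair e p x y \<and> p \<in> A)))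
   \<and> (\<forall>x. (\<exists>y. e y x) \<longrightarrow> (\<exists>y. e y x \<and> \<not> (\<exists>z. e z y \<and> e z x)))"

definition m_Infinity :: "('a \<Rightarrow> 'a \<Rightarrow> bool) \<Rightarrow> bool" where
  "m_Infinity e \<equiv> \<exists>x. (\<exists>z. m_empty e z \<and> e z x) \<and>
                       (\<forall>y. e y x \<longrightarrow> (\<exists>s. m_succ e s y \<and> e s x))"

definition m_TC :: "('a \<Rightarrow> 'a \<Rightarrow> bool) \<Rightarrow> bool" where
  "m_TC e \<equiv> \<forall>x. \<exists>t. m_transitive e t \<and> (\<forall>z. e z x \<longrightarrow> e z t) \<and>
     (\<forall>t'. m_transitive e t' \<and> (\<forall>z. e z x \<longrightarrow> e z t') \<longrightarrow> (\<forall>z. e z t \<longrightarrow> e z t'))"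

definition GB_plus_inf :: "('a \<Rightarrow> 'a \<Rightarrow> bool) \<Rightarrow> 'a set set \<Rightarrow> bool" where
  "GB_plus_inf e Cl \<equiv> GB_common e Cl \<and> m_Infinity e"

definition GB_minus_inf :: "('a \<Rightarrow> 'a \<Rightarrow> bool) \<Rightarrow> 'a set set \<Rightarrow> bool" where
  "GB_minus_inf e Cl \<equiv> GB_common e Cl \<and> \<not> m_Infinity e \<and> m_TC e"

end

theory Submission
  imports Defs
begin

fun crn :: "(nat \<Rightarrow> nat) \<Rightarrow> cform \<Rightarrow> cform" where
  "crn g (CMem i j) = CMem i j"
| "crn g (CEq i j) = CEq i j"
| "crn g (CIn i k) = CIn i (g k)"
| "crn g (CNeg \<phi>) = CNeg (crn g \<phi>)"
| "crn g (COr \<phi> \<psi>) = COr (crn g \<phi>) (crn g \<psi>)"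
| "crn g (CEx i \<phi>) = CEx i (crn g \<phi>)"

lemma csat_crn: "csat e s c (crn g \<phi>) = csat e s (c \<circ> g) \<phi>"
  by (induction \<phi> arbitrary: s) auto

definition Def :: "('a \<Rightarrow> 'a \<Rightarrow> bool) \<Rightarrow> 'a set set \<Rightarrow> ((nat \<Rightarrow> 'a) \<Rightarrow> bool) \<Rightarrow> bool" where
  "Def e Cl P \<equiv> \<forall>f B A0. A0 \<in> Cl \<longrightarrow> (\<forall>n. f n < (B::nat)) \<longrightarrow>
     (\<exists>c \<phi>. (\<forall>k. c k \<in> Cl) \<and> (\<forall>s. csat e s c \<phi> = P (s \<circ> f)))"

lemma Def_mem: "Def e Cl (\<lambda>s. e (s i) (s j))"
  unfolding Def_def
  by (intro allI impI, rule exI[of _ "\<lambda>_. A0" for A0], rule_tac x="CMem (f i) (f j)" in exI) auto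

lemma Def_eq: "Def e Cl (\<lambda>s. s i = s j)"
  unfolding Def_def
  by (intro allI impI, rule exI[of _ "\<lambda>_. A0" for A0], rule_tac x="CEq (f i) (f j)" in exI) auto

lemma Def_cl: "A \<in> Cl \<Longrightarrow> Def e Cl (\<lambda>s. s i \<in> A)"
  unfolding Def_def
  by (intro allI impI, rule exI[of _ "\<lambda>_. A"], rule_tac x="CIn (f i) 0" in exI) auto

lemma Def_not: "Def e Cl P \<Longrightarrow> Def e Cl (\<lambda>s. \<not> P s)"
  unfolding Def_def
proof (intro allI impI)
  fix f :: "nat \<Rightarrow> nat" and B A0 assume H: "\<forall>f B A0. A0 \<in> Cl \<longrightarrow> (\<forall>n. f n < (B::nat)) \<longrightarrow>
     (\<exists>c \<phi>. (\<forall>k. c k \<in> Cl) \<and> (\<forall>s. csat e s c \<phi> = P (s \<circ> f)))"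
    and "A0 \<in> Cl" "\<forall>n. f n < (B::nat)"
  then obtain c \<phi> where "\<forall>k. c k \<in> Cl" "\<forall>s. csat e s c \<phi> = P (s \<circ> f)" by blast
  then show "\<exists>c \<phi>. (\<forall>k. c k \<in> Cl) \<and> (\<forall>s. csat e s c \<phi> = (\<not> P (s \<circ> f)))"
    by (intro exI[of _ c] exI[of _ "CNeg \<phi>"]) auto
qed

lemma Def_or: "Def e Cl P \<Longrightarrow> Def e Cl Q \<Longrightarrow> Def e Cl (\<lambda>s. P s \<or> Q s)"
  unfolding Def_def
proof (intro allI impI)
  fix f :: "nat \<Rightarrow> nat" and B A0 assume H1: "\<forall>f B A0. A0 \<in> Cl \<longrightarrow> (\<forall>n. f n < (B::nat)) \<longrightarrow>
     (\<exists>c \<phi>. (\<forall>k. c k \<in> Cl) \<and> (\<forall>s. csat e s c \<phi> = P (s \<circ> f)))"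
    and H2: "\<forall>f B A0. A0 \<in> Cl \<longrightarrow> (\<forall>n. f n < (B::nat)) \<longrightarrow>
     (\<exists>c \<phi>. (\<forall>k. c k \<in> Cl) \<and> (\<forall>s. csat e s c \<phi> = Q (s \<circ> f)))"
    and A: "A0 \<in> Cl" "\<forall>n. f n < (B::nat)"
  from H1 A obtain c1 \<phi>1 where c1: "\<forall>k. c1 k \<in> Cl" "\<forall>s. csat e s c1 \<phi>1 = P (s \<circ> f)" by blast
  from H2 A obtain c2 \<phi>2 where c2: "\<forall>k. c2 k \<in> Cl" "\<forall>s. csat e s c2 \<phi>2 = Q (s \<circ> f)" by blast
  define c where "c = (\<lambda>k::nat. if even k then c1 (k div 2) else c2 (k div 2))"
  have e1: "c \<circ> (\<lambda>k. 2*k) = c1" unfolding c_def by auto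
  have e2: "c \<circ> (\<lambda>k. Suc (2*k)) = c2" unfolding c_def by auto
  have "\<forall>k. c k \<in> Cl" unfolding c_def using c1 c2 by auto
  moreover have "\<forall>s. csat e s c (COr (crn (\<lambda>k. 2*k) \<phi>1) (crn (\<lambda>k. Suc (2*k)) \<phi>2)) = (P (s \<circ> f) \<or> Q (s \<circ> f))"
    using c1 c2 by (simp add: csat_crn e1 e2)
  ultimately show "\<exists>c \<phi>. (\<forall>k. c k \<in> Cl) \<and> (\<forall>s. csat e s c \<phi> = (P (s \<circ> f) \<or> Q (s \<circ> f)))" by blast
qed

lemma Def_ex: "Def e Cl (\<lambda>s. P (s 0) (\<lambda>n. s (Suc n))) \<Longrightarrow> Def e Cl (\<lambda>s. \<exists>x. P x s)"
  unfolding Def_def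
proof (intro allI impI)
  fix f :: "nat \<Rightarrow> nat" and B A0 assume H: "\<forall>f B A0. A0 \<in> Cl \<longrightarrow> (\<forall>n. f n < (B::nat)) \<longrightarrow>
     (\<exists>c \<phi>. (\<forall>k. c k \<in> Cl) \<and> (\<forall>s. csat e s c \<phi> = P ((s \<circ> f) 0) (\<lambda>n. (s \<circ> f) (Suc n))))"
    and A: "A0 \<in> Cl" "\<forall>n. f n < (B::nat)"
  have cb: "\<forall>n. case_nat B f n < Suc B" using A(2) by (auto split: nat.split simp: less_Suc_eq)
  obtain c \<phi> where c: "\<forall>k. c k \<in> Cl"
    "\<forall>s. csat e s c \<phi> = P ((s \<circ> case_nat B f) 0) (\<lambda>n. (s \<circ> case_nat B f) (Suc n))"
    using H[rule_format, of A0 "case_nat B f" "Suc B", OF A(1) cb[rule_format]] by blast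
  have "\<forall>s. csat e s c (CEx B \<phi>) = (\<exists>x. P x (s \<circ> f))"
  proof
    fix s :: "nat \<Rightarrow> 'a"
    have "\<And>x. (\<lambda>n. (s(B:=x)) (f n)) = (\<lambda>n. s (f n))" using A(2) by (auto intro!: ext)
    then show "csat e s c (CEx B \<phi>) = (\<exists>x. P x (s \<circ> f))" using c(2) by (simp add: comp_def)
  qed
  then show "\<exists>c \<phi>. (\<forall>k. c k \<in> Cl) \<and> (\<forall>s. csat e s c \<phi> = (\<exists>x. P x (s \<circ> f)))" using c(1) by blast
qed

lemma Def_and: "Def e Cl P \<Longrightarrow> Def e Cl Q \<Longrightarrow> Def e Cl (\<lambda>s. P s \<and> Q s)"
proof -
  assume "Def e Cl P" "Def e Cl Q"
  then have "Def e Cl (\<lambda>s. \<not> (\<not> P s \<or> \<not> Q s))" by (intro Def_not Def_or)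
  then show ?thesis by simp
qed

lemma Def_imp: "Def e Cl P \<Longrightarrow> Def e Cl Q \<Longrightarrow> Def e Cl (\<lambda>s. P s \<longrightarrow> Q s)"
proof -
  assume "Def e Cl P" "Def e Cl Q"
  then have "Def e Cl (\<lambda>s. \<not> P s \<or> Q s)" by (intro Def_not Def_or)
  then show ?thesis by simp
qed

lemma Def_iff: "Def e Cl P \<Longrightarrow> Def e Cl Q \<Longrightarrow> Def e Cl (\<lambda>s. P s \<longleftrightarrow> Q s)"
proof -
  assume "Def e Cl P" "Def e Cl Q"
  then have "Def e Cl (\<lambda>s. (P s \<longrightarrow> Q s) \<and> (Q s \<longrightarrow> P s))" by (intro Def_and Def_imp)
  then show ?thesis by (simp add: iff_conv_conj_imp)
qed

lemma Def_all: "Def e Cl (\<lambda>s. P (s 0) (\<lambda>n. s (Suc n))) \<Longrightarrow> Def e Cl (\<lambda>s. \<forall>x. P x s)"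
proof -
  assume "Def e Cl (\<lambda>s. P (s 0) (\<lambda>n. s (Suc n)))"
  then have "Def e Cl (\<lambda>s. \<not> P (s 0) (\<lambda>n. s (Suc n)))" by (rule Def_not)
  then have "Def e Cl (\<lambda>s. \<exists>x. \<not> P x s)" using Def_ex[of e Cl "\<lambda>x s. \<not> P x s"] by simp
  then have "Def e Cl (\<lambda>s. \<not> (\<exists>x. \<not> P x s))" by (rule Def_not)
  then show ?thesis by simp
qed

lemma Def_True: "Def e Cl (\<lambda>s. True)"
proof -
  have "Def e Cl (\<lambda>s. s 0 = s 0)" by (rule Def_eq)
  then show ?thesis by simp
qed

lemma Def_False: "Def e Cl (\<lambda>s. False)"
proof -
  have "Def e Cl (\<lambda>s. \<not> True)" by (intro Def_not Def_True)
  then show ?thesis by simp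
qed

lemmas Def_basic = Def_all Def_ex Def_and Def_or Def_imp Def_iff Def_not Def_mem Def_eq Def_cl Def_True Def_False

lemma gb_cl: "GB_common e Cl \<Longrightarrow> {z. e z x} \<in> Cl"
  unfolding GB_common_def by (elim conjE) (rule spec)

lemma gb_comp: "GB_common e Cl \<Longrightarrow> (\<forall>k. c k \<in> Cl) \<Longrightarrow> {x. csat e (s(0:=x)) c \<phi>} \<in> Cl"
  unfolding GB_common_def by (elim conjE) (erule allE, erule allE, erule allE, erule mp)

lemma DefD: "Def e Cl P \<Longrightarrow> A0 \<in> Cl \<Longrightarrow> (\<forall>n. f n < (B::nat)) \<Longrightarrow>
     (\<exists>c \<phi>. (\<forall>k. c k \<in> Cl) \<and> (\<forall>s. csat e s c \<phi> = P (s \<circ> f)))"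
  unfolding Def_def by blast

lemma Def_comp:
  assumes "GB_common e Cl" "Def e Cl P" "\<forall>n. f n < (B::nat)"
  shows "{x. P ((s(0:=x)) \<circ> f)} \<in> Cl"
proof -
  have A0: "{z. e z x} \<in> Cl" for x using assms(1) by (rule gb_cl)
  obtain c \<phi> where c: "\<forall>k. c k \<in> Cl" "\<forall>s. csat e s c \<phi> = P (s \<circ> f)"
    using DefD[OF assms(2) A0 assms(3)] by blast
  have "{x. csat e (s(0 := x)) c \<phi>} \<in> Cl" using assms(1) c(1) by (rule gb_comp)
  then show ?thesis using c(2) by simp
qed

lemma Def_comp1:
  assumes "GB_common e Cl" "Def e Cl (\<lambda>s. P (s 0))"
  shows "{x. P x} \<in> Cl"
  using Def_comp[OF assms, of "\<lambda>_. 0" 1 undefined] by simp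

lemma Def_comp2:
  assumes "GB_common e Cl" "Def e Cl (\<lambda>s. P (s 0) (s 1))"
  shows "{x. P x a} \<in> Cl"
  using Def_comp[OF assms, of "\<lambda>n. if n = 0 then 0 else 1" 2 "\<lambda>_. a"] by (simp add: comp_def)

lemma Def_comp3:
  assumes "GB_common e Cl" "Def e Cl (\<lambda>s. P (s 0) (s 1) (s 2))"
  shows "{x. P x a b} \<in> Cl"
  using Def_comp[OF assms, of "\<lambda>n. if n = 0 then 0 else if n = 1 then 1 else 2" 3 "(\<lambda>_. a)(2:=b)"] by (simp add: comp_def)

lemma Def_comp4:
  assumes "GB_common e Cl" "Def e Cl (\<lambda>s. P (s 0) (s 1) (s 2) (s 3))"
  shows "{x. P x a b c} \<in> Cl"
  using Def_comp[OF assms, of "\<lambda>n. if n = 0 then 0 else if n = 1 then 1 else if n = 2 then 2 else 3" 4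
     "(\<lambda>_. a)(2:=b, 3:=c)"] by (simp add: comp_def)

lemma Def_empty: "Def e Cl (\<lambda>s. m_empty e (s i))"
  unfolding m_empty_def by (intro Def_basic)
lemma Def_upair: "Def e Cl (\<lambda>s. m_upair e (s i) (s j) (s k))"
  unfolding m_upair_def by (intro Def_basic)
lemma Def_pair: "Def e Cl (\<lambda>s. m_pair e (s i) (s j) (s k))"
  unfolding m_pair_def by (intro Def_basic Def_upair)
lemma Def_succ: "Def e Cl (\<lambda>s. m_succ e (s i) (s j))"
  unfolding m_succ_def by (intro Def_basic)
lemma Def_union2: "Def e Cl (\<lambda>s. m_union2 e (s i) (s j) (s k))"
  unfolding m_union2_def by (intro Def_basic)
lemma Def_transitive: "Def e Cl (\<lambda>s. m_transitive e (s i))"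
  unfolding m_transitive_def by (intro Def_basic)
lemma Def_ord: "Def e Cl (\<lambda>s. m_ord e (s i))"
  unfolding m_ord_def by (intro Def_basic Def_transitive)
lemma Def_nat: "Def e Cl (\<lambda>s. m_nat e (s i))"
  unfolding m_nat_def by (intro Def_basic Def_ord Def_empty Def_succ)
lemma Def_le: "Def e Cl (\<lambda>s. m_le e (s i) (s j))"
  unfolding m_le_def by (intro Def_basic)
lemma Def_num: "Def e Cl (\<lambda>s. m_num e k (s i))"
proof (induction k arbitrary: i)
  case 0 then show ?case by (simp add: Def_empty)
next
  case (Suc k) then show ?case by (simp, intro Def_basic Def_succ)
qed
lemma Def_tag: "Def e Cl (\<lambda>s. m_tag e k (s i) (s j))"
  unfolding m_tag_def by (intro Def_basic Def_num Def_pair)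
lemma Def_tag2: "Def e Cl (\<lambda>s. m_tag2 e k (s i) (s j) (s l))"
  unfolding m_tag2_def by (intro Def_basic Def_tag Def_pair)
lemma Def_isVar: "Def e Cl (\<lambda>s. isVar e (s i) (s j))"
  unfolding isVar_def by (intro Def_basic Def_tag Def_nat)
lemma Def_isConst: "Def e Cl (\<lambda>s. isConst e (s i) (s j))"
  unfolding isConst_def by (intro Def_basic Def_tag)
lemma Def_isTerm: "Def e Cl (\<lambda>s. isTerm e (s i))"
  unfolding isTerm_def by (intro Def_basic Def_isVar Def_isConst)
lemma Def_isEqF: "Def e Cl (\<lambda>s. isEqF e (s i) (s j) (s k))"
  unfolding isEqF_def by (intro Def_basic Def_isTerm Def_tag2)
lemma Def_isMemF: "Def e Cl (\<lambda>s. isMemF e (s i) (s j) (s k))"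
  unfolding isMemF_def by (intro Def_basic Def_isTerm Def_tag2)
lemma Def_isNeg: "Def e Cl (\<lambda>s. isNeg e (s i) (s j))"
  unfolding isNeg_def by (intro Def_basic Def_tag)
lemma Def_isOr: "Def e Cl (\<lambda>s. isOr e (s i) (s j) (s k))"
  unfolding isOr_def by (intro Def_basic Def_tag2)
lemma Def_isEx: "Def e Cl (\<lambda>s. isEx e (s i) (s j) (s k))"
  unfolding isEx_def by (intro Def_basic Def_tag2 Def_nat)

lemmas Def_syn0 = Def_empty Def_upair Def_pair Def_succ Def_union2 Def_transitive Def_ord Def_nat Def_le
  Def_num Def_tag Def_tag2 Def_isVar Def_isConst Def_isTerm Def_isEqF Def_isMemF Def_isNeg Def_isOr Def_isEx

lemma Def_LPformula: "Def e Cl (\<lambda>s. LPformula e (s i))"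
  unfolding LPformula_def form_closed_def by (intro Def_basic Def_syn0)
lemma Def_LZFformula: "Def e Cl (\<lambda>s. LZFformula e (s i))"
  unfolding LZFformula_def form_closed_def by (intro Def_basic Def_syn0)
lemma Def_inRel2: "Def e Cl (\<lambda>s. inRel2 e (s i) (s j) (s k))"
  unfolding inRel2_def by (intro Def_basic Def_syn0)
lemma Def_depth_closed: "Def e Cl (\<lambda>s. depth_closed e (s i))"
  unfolding depth_closed_def by (intro Def_basic Def_syn0 Def_inRel2)
lemma Def_hasDepth: "Def e Cl (\<lambda>s. hasDepth e (s i) (s j))"
  unfolding hasDepth_def by (intro Def_basic Def_depth_closed Def_inRel2)
lemma Def_isAssign: "Def e Cl (\<lambda>s. isAssign e (s i))"
  unfolding isAssign_def by (intro Def_basic Def_syn0)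
lemma Def_isSingAssign: "Def e Cl (\<lambda>s. isSingAssign e (s i) (s j) (s k))"
  unfolding isSingAssign_def by (intro Def_basic Def_syn0)
lemma Def_remove: "Def e Cl (\<lambda>s. m_remove e (s i) (s j) (s k))"
  unfolding m_remove_def by (intro Def_basic Def_syn0)
lemma Def_tsubst: "Def e Cl (\<lambda>s. tsubst e (s i) (s j) (s k))"
  unfolding tsubst_def by (intro Def_basic Def_syn0)
lemma Def_triple: "Def e Cl (\<lambda>s. m_triple e (s i) (s j) (s k) (s l))"
  unfolding m_triple_def by (intro Def_basic Def_syn0)
lemma Def_inRel3: "Def e Cl (\<lambda>s. inRel3 e (s i) (s j) (s k) (s l))"
  unfolding inRel3_def by (intro Def_basic Def_triple)
lemma Def_subst_closed: "Def e Cl (\<lambda>s. subst_closed e (s i))"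
  unfolding subst_closed_def by (intro Def_basic Def_syn0 Def_triple Def_isAssign Def_tsubst Def_inRel3 Def_remove)
lemma Def_ssubst: "Def e Cl (\<lambda>s. ssubst e (s i) (s j) (s k))"
  unfolding ssubst_def by (intro Def_basic Def_subst_closed Def_inRel3)
lemma Def_notfree_closed: "Def e Cl (\<lambda>s. notfree_closed e (s i) (s j))"
  unfolding notfree_closed_def by (intro Def_basic Def_syn0 Def_LPformula)
lemma Def_notFree: "Def e Cl (\<lambda>s. notFree e (s i) (s j))"
  unfolding notFree_def by (intro Def_basic Def_notfree_closed)
lemma Def_LPclosed: "Def e Cl (\<lambda>s. LPclosed e (s i))"
  unfolding LPclosed_def by (intro Def_basic Def_LPformula Def_notFree Def_syn0)

lemma Def_FSentD: "Def e Cl (\<lambda>s. s i \<in> FSent e (DepthF e (s j)))"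
  unfolding FSent_def DepthF_def mem_Collect_eq
  by (intro Def_basic Def_LPclosed Def_LZFformula Def_hasDepth Def_le Def_isAssign Def_ssubst)

locale gbm =
  fixes e :: "'a \<Rightarrow> 'a \<Rightarrow> bool" and Cl :: "'a set set"
  assumes gb: "GB_common e Cl"
begin

lemma ax_ext: "(\<And>z. e z x \<longleftrightarrow> e z y) \<Longrightarrow> x = y"
  using gb[unfolded GB_common_def, THEN conjunct1] by blast
lemma ax_pair: "\<exists>p. m_upair e p a b"
  using gb[unfolded GB_common_def, THEN conjunct2, THEN conjunct2, THEN conjunct2, THEN conjunct1] by blast
lemma ax_union: "\<exists>u. \<forall>z. e z u \<longleftrightarrow> (\<exists>y. e y x \<and> e z y)"
  using gb[unfolded GB_common_def, THEN conjunct2, THEN conjunct2, THEN conjunct2, THEN conjunct2, THEN conjunct1] by blast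
lemma ax_power: "\<exists>p. \<forall>z. e z p \<longleftrightarrow> (\<forall>w. e w z \<longrightarrow> e w x)"
  using gb[unfolded GB_common_def, THEN conjunct2, THEN conjunct2, THEN conjunct2, THEN conjunct2, THEN conjunct2, THEN conjunct1] by blast
lemma ax_sep: "A \<in> Cl \<Longrightarrow> \<exists>y. \<forall>z. e z y \<longleftrightarrow> e z x \<and> z \<in> A"
  using gb[unfolded GB_common_def, THEN conjunct2, THEN conjunct2, THEN conjunct2, THEN conjunct2, THEN conjunct2, THEN conjunct2, THEN conjunct1] by blast
lemma ax_found: "e y x \<Longrightarrow> \<exists>y. e y x \<and> \<not> (\<exists>z. e z y \<and> e z x)"
  using gb[unfolded GB_common_def, THEN conjunct2, THEN conjunct2, THEN conjunct2, THEN conjunct2, THEN conjunct2, THEN conjunct2, THEN conjunct2, THEN conjunct2] by blast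

lemma cl1: "Def e Cl (\<lambda>s. P (s 0)) \<Longrightarrow> {x. P x} \<in> Cl" using Def_comp1[OF gb] .
lemma cl2: "Def e Cl (\<lambda>s. P (s 0) (s 1)) \<Longrightarrow> {x. P x a} \<in> Cl" using Def_comp2[OF gb] .
lemma cl3: "Def e Cl (\<lambda>s. P (s 0) (s 1) (s 2)) \<Longrightarrow> {x. P x a b} \<in> Cl" using Def_comp3[OF gb] .
lemma cl4: "Def e Cl (\<lambda>s. P (s 0) (s 1) (s 2) (s 3)) \<Longrightarrow> {x. P x a b c} \<in> Cl" using Def_comp4[OF gb] .

lemma empty_ex: "\<exists>x. m_empty e x"
proof -
  have "{x. False} \<in> Cl" using cl1[of "\<lambda>x. False", OF Def_False] .
  then obtain y where "\<forall>z. e z y \<longleftrightarrow> e z y \<and> z \<in> {x. False}" using ax_sep by blast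
  then show ?thesis unfolding m_empty_def by auto
qed

lemma empty_unique: "m_empty e x \<Longrightarrow> m_empty e y \<Longrightarrow> x = y"
  unfolding m_empty_def using ax_ext by blast

lemma upair_unique: "m_upair e p a b \<Longrightarrow> m_upair e q a b \<Longrightarrow> p = q"
  unfolding m_upair_def using ax_ext by blast

lemma upair_eq: "m_upair e p a b \<Longrightarrow> m_upair e p c d \<Longrightarrow> (a = c \<and> b = d) \<or> (a = d \<and> b = c)"
  unfolding m_upair_def by metis

lemma pair_ex: "\<exists>p. m_pair e p a b"
proof -
  obtain u where "m_upair e u a a" using ax_pair by blast
  moreover obtain w where "m_upair e w a b" using ax_pair by blast
  moreover obtain p where "m_upair e p u w" using ax_pair by blast
  ultimately show ?thesis unfolding m_pair_def by blast
qed

lemma pair_unique: "m_pair e p a b \<Longrightarrow> m_pair e q a b \<Longrightarrow> p = q"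
  unfolding m_pair_def using upair_unique by metis

lemma pair_inj: "m_pair e p a b \<Longrightarrow> m_pair e p c d \<Longrightarrow> a = c \<and> b = d"
proof -
  assume "m_pair e p a b" "m_pair e p c d"
  then obtain u w u' w' where h: "m_upair e u a a" "m_upair e w a b" "m_upair e p u w"
    "m_upair e u' c c" "m_upair e w' c d" "m_upair e p u' w'" unfolding m_pair_def by blast
  from upair_eq[OF h(3) h(6)] show ?thesis
  proof
    assume "u = u' \<and> w = w'"
    then show ?thesis using upair_eq h by metis
  next
    assume "u = w' \<and> w = u'"
    then show ?thesis using upair_eq h by metis
  qed
qed

lemma union2_ex: "\<exists>u. m_union2 e u x y"
proof -
  obtain p where p: "m_upair e p x y" using ax_pair by blast
  obtain u where "\<forall>z. e z u \<longleftrightarrow> (\<exists>w. e w p \<and> e z w)" using ax_union by blast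
  then show ?thesis using p unfolding m_union2_def m_upair_def by auto
qed

lemma succ_ex: "\<exists>y. m_succ e y x"
proof -
  obtain p where p: "m_upair e p x x" using ax_pair by blast
  obtain u where "m_union2 e u x p" using union2_ex by blast
  then show ?thesis using p unfolding m_union2_def m_upair_def m_succ_def by blast
qed

lemma succ_unique: "m_succ e y x \<Longrightarrow> m_succ e y' x \<Longrightarrow> y = y'"
  unfolding m_succ_def using ax_ext by blast

lemma no_self: "\<not> e x x"
proof
  assume h: "e x x"
  obtain p where p: "m_upair e p x x" using ax_pair by blast
  then have "e x p" unfolding m_upair_def by blast
  then obtain y where "e y p" "\<not> (\<exists>z. e z y \<and> e z p)" using ax_found by blast
  then show False using p h unfolding m_upair_def by auto
qed

lemma no_2cycle: "e x y \<Longrightarrow> e y x \<Longrightarrow> False"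
proof -
  assume h: "e x y" "e y x"
  obtain p where p: "m_upair e p x y" using ax_pair by blast
  then have "e x p" unfolding m_upair_def by blast
  then obtain w where "e w p" "\<not> (\<exists>z. e z w \<and> e z p)" using ax_found by blast
  then show False using p h unfolding m_upair_def by auto
qed

lemma num_ex: "\<exists>t. m_num e k t"
proof (induction k)
  case 0 then show ?case using empty_ex by simp
next
  case (Suc k) then show ?case using succ_ex by (metis m_num.simps(2))
qed

lemma num_unique: "m_num e k t \<Longrightarrow> m_num e k t' \<Longrightarrow> t = t'"
proof (induction k arbitrary: t t')
  case 0 then show ?case using empty_unique by simp
next
  case (Suc k) then show ?case using succ_unique by auto metis
qed

lemma num_mem: "m_num e j t \<Longrightarrow> m_num e k t' \<Longrightarrow> j < k \<Longrightarrow> e t t'"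
proof (induction k arbitrary: t')
  case 0 then show ?case by simp
next
  case (Suc k)
  then obtain y where y: "m_num e k y" "m_succ e t' y" by auto
  show ?case
  proof (cases "j = k")
    case True then have "t = y" using num_unique Suc y by blast
    then show ?thesis using y unfolding m_succ_def by blast
  next
    case False then have "e t y" using Suc y by auto
    then show ?thesis using y unfolding m_succ_def by blast
  qed
qed

lemma num_inj: "m_num e j t \<Longrightarrow> m_num e k t \<Longrightarrow> j = k"
  by (metis linorder_neqE_nat num_mem no_self)

lemma tag_inj: "m_tag e k p a \<Longrightarrow> m_tag e k' p a' \<Longrightarrow> k = k' \<and> a = a'"
  unfolding m_tag_def using pair_inj num_inj by metis

lemma tag_ex: "\<exists>p. m_tag e k p a"
  unfolding m_tag_def using num_ex pair_ex by blast

lemma tag2_ex: "\<exists>p. m_tag2 e k p a b"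
  unfolding m_tag2_def using tag_ex pair_ex by blast

definition tagof :: "'a \<Rightarrow> nat \<Rightarrow> bool" where "tagof x k \<equiv> \<exists>a. m_tag e k x a"

lemma tagof_inj: "tagof x k \<Longrightarrow> tagof x k' \<Longrightarrow> k = k'"
  unfolding tagof_def using tag_inj by blast

lemma tag2_inj: "m_tag2 e k p a b \<Longrightarrow> m_tag2 e k' p a' b' \<Longrightarrow> k = k' \<and> a = a' \<and> b = b'"
  unfolding m_tag2_def using tag_inj pair_inj by metis

lemma tagof_var: "isVar e t i \<Longrightarrow> tagof t 0" unfolding isVar_def tagof_def by blast
lemma tagof_const: "isConst e t i \<Longrightarrow> tagof t 1" unfolding isConst_def tagof_def by blast
lemma tagof_eq: "isEqF e t a b \<Longrightarrow> tagof t 2" unfolding isEqF_def m_tag2_def tagof_def by blast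
lemma tagof_mem: "isMemF e t a b \<Longrightarrow> tagof t 3" unfolding isMemF_def m_tag2_def tagof_def by blast
lemma tagof_neg: "isNeg e t a \<Longrightarrow> tagof t 4" unfolding isNeg_def tagof_def by blast
lemma tagof_or: "isOr e t a b \<Longrightarrow> tagof t 5" unfolding isOr_def m_tag2_def tagof_def by blast
lemma tagof_ex: "isEx e t a b \<Longrightarrow> tagof t 6" unfolding isEx_def m_tag2_def tagof_def by blast

lemmas tagofs = tagof_var tagof_const tagof_eq tagof_mem tagof_neg tagof_or tagof_ex

lemma distinct_syn0: "isVar e t i \<Longrightarrow> isConst e t a \<Longrightarrow> False"
  using tagof_inj[OF tagof_var tagof_const] by simp
lemma distinct_syn1: "isEqF e x a b \<Longrightarrow> isMemF e x c d \<Longrightarrow> False"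
  using tagof_inj[OF tagof_eq tagof_mem] by simp
lemma distinct_syn2: "isEqF e x a b \<Longrightarrow> isNeg e x c \<Longrightarrow> False"
  using tagof_inj[OF tagof_eq tagof_neg] by simp
lemma distinct_syn3: "isEqF e x a b \<Longrightarrow> isOr e x c d \<Longrightarrow> False"
  using tagof_inj[OF tagof_eq tagof_or] by simp
lemma distinct_syn4: "isEqF e x a b \<Longrightarrow> isEx e x c d \<Longrightarrow> False"
  using tagof_inj[OF tagof_eq tagof_ex] by simp
lemma distinct_syn5: "isMemF e x a b \<Longrightarrow> isNeg e x c \<Longrightarrow> False"
  using tagof_inj[OF tagof_mem tagof_neg] by simp
lemma distinct_syn6: "isMemF e x a b \<Longrightarrow> isOr e x c d \<Longrightarrow> False"
  using tagof_inj[OF tagof_mem tagof_or] by simp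
lemma distinct_syn7: "isMemF e x a b \<Longrightarrow> isEx e x c d \<Longrightarrow> False"
  using tagof_inj[OF tagof_mem tagof_ex] by simp
lemma distinct_syn8: "isNeg e x a \<Longrightarrow> isOr e x c d \<Longrightarrow> False"
  using tagof_inj[OF tagof_neg tagof_or] by simp
lemma distinct_syn9: "isNeg e x a \<Longrightarrow> isEx e x c d \<Longrightarrow> False"
  using tagof_inj[OF tagof_neg tagof_ex] by simp
lemma distinct_syn10: "isOr e x a b \<Longrightarrow> isEx e x c d \<Longrightarrow> False"
  using tagof_inj[OF tagof_or tagof_ex] by simp
lemmas distinct_syn = distinct_syn0 distinct_syn1 distinct_syn2 distinct_syn3 distinct_syn4 distinct_syn5 distinct_syn6 distinct_syn7 distinct_syn8 distinct_syn9 distinct_syn10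

lemma inj_syn:
  "isVar e t i \<Longrightarrow> isVar e t j \<Longrightarrow> i = j"
  "isConst e t a \<Longrightarrow> isConst e t b \<Longrightarrow> a = b"
  "isEqF e x a b \<Longrightarrow> isEqF e x c d \<Longrightarrow> a = c \<and> b = d"
  "isMemF e x a b \<Longrightarrow> isMemF e x c d \<Longrightarrow> a = c \<and> b = d"
  "isNeg e x a \<Longrightarrow> isNeg e x c \<Longrightarrow> a = c"
  "isOr e x a b \<Longrightarrow> isOr e x c d \<Longrightarrow> a = c \<and> b = d"
  "isEx e x a b \<Longrightarrow> isEx e x c d \<Longrightarrow> a = c \<and> b = d"
  unfolding isVar_def isConst_def isEqF_def isMemF_def isNeg_def isOr_def isEx_def
  by (blast dest: tag_inj tag2_inj)+

end

context gbm begin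

lemma compl_cl: "A \<in> Cl \<Longrightarrow> {x. x \<notin> A} \<in> Cl"
  by (rule cl1) (intro Def_basic)

lemma ind_set:
  assumes A: "A \<in> Cl" and tr: "\<forall>n' n. e n' n \<and> e n K \<longrightarrow> e n' K"
    and step: "\<And>n. e n K \<Longrightarrow> (\<forall>n'. e n' n \<longrightarrow> n' \<in> A) \<Longrightarrow> n \<in> A"
    and n0: "e n0 K"
  shows "n0 \<in> A"
proof (rule ccontr)
  assume nA: "n0 \<notin> A"
  obtain Y where Y: "\<forall>z. e z Y \<longleftrightarrow> e z K \<and> z \<in> {x. x \<notin> A}" using ax_sep[OF compl_cl[OF A]] by blast
  then have "e n0 Y" using n0 nA by simp
  then obtain m where m: "e m Y" "\<not> (\<exists>z. e z m \<and> e z Y)" using ax_found by blast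
  have "\<forall>n'. e n' m \<longrightarrow> n' \<in> A"
  proof (intro allI impI)
    fix n' assume "e n' m"
    moreover have "e m K" using m Y by simp
    ultimately have "e n' K" using tr by blast
    then show "n' \<in> A" using m Y \<open>e n' m\<close> by auto
  qed
  moreover have "e m K" using m Y by simp
  ultimately have "m \<in> A" using step by blast
  then show False using m Y by simp
qed

lemma ord_elem: "m_ord e x \<Longrightarrow> e y x \<Longrightarrow> m_ord e y"
  unfolding m_ord_def m_transitive_def by blast

lemma nat_elem: "m_nat e x \<Longrightarrow> e y x \<Longrightarrow> m_nat e y"
proof -
  assume h: "m_nat e x" "e y x"
  then have "m_ord e y" using ord_elem unfolding m_nat_def by blast
  moreover have "\<forall>m. (m = y \<or> e m y) \<longrightarrow> m_empty e m \<or> (\<exists>k. m_succ e m k)"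
    using h unfolding m_nat_def m_ord_def m_transitive_def by blast
  ultimately show ?thesis unfolding m_nat_def by blast
qed

lemma nat_ord: "m_nat e x \<Longrightarrow> m_ord e x" unfolding m_nat_def by blast
lemma nat_trans: "m_nat e x \<Longrightarrow> e z y \<Longrightarrow> e y x \<Longrightarrow> e z x"
  unfolding m_nat_def m_ord_def m_transitive_def by blast

lemma trich:
  assumes a: "m_ord e a" and b: "m_ord e b"
  shows "e a b \<or> a = b \<or> e b a"
proof -
  obtain sa where sa: "m_succ e sa a" using succ_ex by blast
  obtain sb where sb: "m_succ e sb b" using succ_ex by blast
  obtain K where K: "m_union2 e K sa sb" using union2_ex by blast
  have Kc: "\<And>z. e z K \<longleftrightarrow> z = a \<or> z = b \<or> e z a \<or> e z b"
    using K sa sb unfolding m_union2_def m_succ_def by auto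
  have trK: "\<forall>n' n. e n' n \<and> e n K \<longrightarrow> e n' K"
    using a b Kc unfolding m_ord_def m_transitive_def by metis
  have ordK: "\<And>z. e z K \<Longrightarrow> m_ord e z" using Kc a b ord_elem by metis
  let ?A = "{x. \<forall>y. e y K \<longrightarrow> (e x y \<or> x = y \<or> e y x)}"
  have Acl: "?A \<in> Cl" by (rule cl2) (intro Def_basic)
  have main: "\<And>x. e x K \<Longrightarrow> x \<in> ?A"
  proof -
    fix x0 assume "e x0 K"
    then show "x0 \<in> ?A"
    proof (rule ind_set[OF Acl trK, rotated])
      fix x assume xK: "e x K" and IHx: "\<forall>n'. e n' x \<longrightarrow> n' \<in> ?A"
      let ?B = "{y. e x y \<or> x = y \<or> e y x}"
      have Bcl: "?B \<in> Cl" by (rule cl2) (intro Def_basic)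
      have "\<And>y. e y K \<Longrightarrow> y \<in> ?B"
      proof -
        fix y0 assume "e y0 K"
        then show "y0 \<in> ?B"
        proof (rule ind_set[OF Bcl trK, rotated])
          fix y assume yK: "e y K" and IHy: "\<forall>n'. e n' y \<longrightarrow> n' \<in> ?B"
          show "y \<in> ?B"
          proof (rule ccontr)
            assume nc: "y \<notin> ?B"
            have ox: "m_ord e x" using ordK xK by blast
            have oy: "m_ord e y" using ordK yK by blast
            have "x = y"
            proof (rule ax_ext)
              fix z
              show "e z x \<longleftrightarrow> e z y"
              proof
                assume zx: "e z x"
                then have "z \<in> ?A" using IHx by blast
                then have "e z y \<or> z = y \<or> e y z" using yK by blast
                then show "e z y" using nc zx ox unfolding m_ord_def m_transitive_def by blast
              next
                assume zy: "e z y"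
                then have "z \<in> ?B" using IHy by blast
                then show "e z x" using nc zy oy unfolding m_ord_def m_transitive_def by blast
              qed
            qed
            then show False using nc by simp
          qed
        qed
      qed
      then show "x \<in> ?A" by blast
    qed
  qed
  have "e a K" "e b K" using Kc by auto
  then show ?thesis using main by blast
qed

lemma nat_sub: "m_nat e a \<Longrightarrow> m_nat e b \<Longrightarrow> (\<forall>z. e z a \<longrightarrow> e z b) \<Longrightarrow> a = b \<or> e a b"
  using trich[OF nat_ord nat_ord] no_self by blast

lemma zero_le:
  assumes d: "m_nat e d" and z: "m_empty e z"
  shows "m_le e z d"
proof (cases "\<exists>y. e y d")
  case False
  then have "d = z" using z empty_unique unfolding m_empty_def by blast
  then show ?thesis unfolding m_le_def by simp
next
  case True
  then obtain y where "e y d" by blast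
  then obtain m where m: "e m d" "\<not> (\<exists>w. e w m \<and> e w d)" using ax_found by blast
  then have "m_empty e m \<or> (\<exists>k. m_succ e m k)" using d unfolding m_nat_def by blast
  moreover have "\<not> (\<exists>k. m_succ e m k)"
  proof
    assume "\<exists>k. m_succ e m k"
    then obtain k where "m_succ e m k" by blast
    then have "e k m" unfolding m_succ_def by blast
    then have "e k d" using nat_trans[OF d] m by blast
    then show False using m \<open>e k m\<close> by blast
  qed
  ultimately have "m = z" using z empty_unique by blast
  then show ?thesis using m unfolding m_le_def by simp
qed

lemma le_mem: "m_nat e k \<Longrightarrow> m_le e d k \<Longrightarrow> e x d \<Longrightarrow> e x k"
  unfolding m_le_def using nat_trans by blast

lemma succ_le: "m_nat e k \<Longrightarrow> m_le e d k \<Longrightarrow> m_succ e d d' \<Longrightarrow> e d' k"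
  using le_mem unfolding m_succ_def by blast

lemma union_le:
  assumes k: "m_nat e k" and dk: "m_le e d k" and du: "m_succ e d u" and u: "m_union2 e u d1 d2"
    and n1: "m_nat e d1" and n2: "m_nat e d2"
  shows "e d1 k \<and> e d2 k"
proof -
  have uk: "e u k" using succ_le[OF k dk du] .
  have "e d1 d2 \<or> d1 = d2 \<or> e d2 d1" using trich[OF nat_ord[OF n1] nat_ord[OF n2]] .
  then show ?thesis
  proof (elim disjE)
    assume h: "e d1 d2"
    have "u = d2" by (rule ax_ext) (use u h nat_trans[OF n2] in \<open>unfold m_union2_def, blast\<close>)
    then show ?thesis using uk h nat_trans[OF k] by blast
  next
    assume h: "d1 = d2"
    have "u = d2" by (rule ax_ext) (use u h in \<open>unfold m_union2_def, blast\<close>)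
    then show ?thesis using uk h by blast
  next
    assume h: "e d2 d1"
    have "u = d1" by (rule ax_ext) (use u h nat_trans[OF n1] in \<open>unfold m_union2_def, blast\<close>)
    then show ?thesis using uk h nat_trans[OF k] by blast
  qed
qed

lemma le_refl: "m_le e d d" unfolding m_le_def by simp

end

context gbm begin

lemma LP_cases:
  assumes "LPformula e x"
  shows "(\<exists>t1 t2. (isEqF e x t1 t2 \<or> isMemF e x t1 t2) \<and> isTerm e t1 \<and> isTerm e t2)
    \<or> (\<exists>\<theta>. isNeg e x \<theta> \<and> LPformula e \<theta>)
    \<or> (\<exists>\<theta>1 \<theta>2. isOr e x \<theta>1 \<theta>2 \<and> LPformula e \<theta>1 \<and> LPformula e \<theta>2)
    \<or> (\<exists>i \<theta>. isEx e x i \<theta> \<and> LPformula e \<theta>)"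
proof -
  obtain S where S: "e x S" "form_closed e (isTerm e) S" using assms unfolding LPformula_def by blast
  have "\<And>\<theta>. e \<theta> S \<Longrightarrow> LPformula e \<theta>" using S(2) unfolding LPformula_def by blast
  then show ?thesis using S unfolding form_closed_def by metis
qed

lemma LZF_cases:
  assumes "LZFformula e x"
  shows "(\<exists>t1 t2. (isEqF e x t1 t2 \<or> isMemF e x t1 t2))
    \<or> (\<exists>\<theta>. isNeg e x \<theta> \<and> LZFformula e \<theta>)
    \<or> (\<exists>\<theta>1 \<theta>2. isOr e x \<theta>1 \<theta>2 \<and> LZFformula e \<theta>1 \<and> LZFformula e \<theta>2)
    \<or> (\<exists>i \<theta>. isEx e x i \<theta> \<and> LZFformula e \<theta>)"
proof -
  obtain S where S: "e x S" "form_closed e (\<lambda>t. \<exists>i. isVar e t i) S" using assms unfolding LZFformula_def by blast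
  have "\<And>\<theta>. e \<theta> S \<Longrightarrow> LZFformula e \<theta>" using S(2) unfolding LZFformula_def by blast
  then show ?thesis using S unfolding form_closed_def by metis
qed

lemma LP_neg: "LPformula e x \<Longrightarrow> isNeg e x \<theta> \<Longrightarrow> LPformula e \<theta>"
  using LP_cases distinct_syn inj_syn by metis
lemma LP_or: "LPformula e x \<Longrightarrow> isOr e x \<theta>1 \<theta>2 \<Longrightarrow> LPformula e \<theta>1 \<and> LPformula e \<theta>2"
  using LP_cases distinct_syn inj_syn by metis
lemma LP_atom: "LPformula e x \<Longrightarrow> isEqF e x t1 t2 \<or> isMemF e x t1 t2 \<Longrightarrow> isTerm e t1 \<and> isTerm e t2"
  using LP_cases distinct_syn inj_syn by metis
lemma LZF_neg: "LZFformula e x \<Longrightarrow> isNeg e x \<theta> \<Longrightarrow> LZFformula e \<theta>"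
  using LZF_cases distinct_syn inj_syn by metis
lemma LZF_or: "LZFformula e x \<Longrightarrow> isOr e x \<theta>1 \<theta>2 \<Longrightarrow> LZFformula e \<theta>1 \<and> LZFformula e \<theta>2"
  using LZF_cases distinct_syn inj_syn by metis
lemma LZF_ex: "LZFformula e x \<Longrightarrow> isEx e x i \<theta> \<Longrightarrow> LZFformula e \<theta>"
  using LZF_cases distinct_syn inj_syn by metis

lemma NF_cases:
  assumes "notFree e i x"
  shows "(\<exists>t1 t2. (isEqF e x t1 t2 \<or> isMemF e x t1 t2) \<and> \<not> isVar e t1 i \<and> \<not> isVar e t2 i)
    \<or> (\<exists>\<theta>. isNeg e x \<theta> \<and> notFree e i \<theta>)
    \<or> (\<exists>\<theta>1 \<theta>2. isOr e x \<theta>1 \<theta>2 \<and> notFree e i \<theta>1 \<and> notFree e i \<theta>2)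
    \<or> (\<exists>j \<theta>. isEx e x j \<theta> \<and> ((j = i \<and> LPformula e \<theta>) \<or> notFree e i \<theta>))"
proof -
  obtain N where N: "e x N" "notfree_closed e i N" using assms unfolding notFree_def by blast
  have "\<And>\<theta>. e \<theta> N \<Longrightarrow> notFree e i \<theta>" using N(2) unfolding notFree_def by blast
  then show ?thesis using N unfolding notfree_closed_def by metis
qed

lemma NF_neg: "notFree e i x \<Longrightarrow> isNeg e x \<theta> \<Longrightarrow> notFree e i \<theta>"
  using NF_cases distinct_syn inj_syn by metis
lemma NF_or: "notFree e i x \<Longrightarrow> isOr e x \<theta>1 \<theta>2 \<Longrightarrow> notFree e i \<theta>1 \<and> notFree e i \<theta>2"
  using NF_cases distinct_syn inj_syn by metis
lemma NF_atom: "notFree e i x \<Longrightarrow> isEqF e x t1 t2 \<or> isMemF e x t1 t2 \<Longrightarrow> \<not> isVar e t1 i \<and> \<not> isVar e t2 i"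
  using NF_cases distinct_syn inj_syn by metis

lemma CL_neg: "LPclosed e x \<Longrightarrow> isNeg e x \<theta> \<Longrightarrow> LPclosed e \<theta>"
  unfolding LPclosed_def using LP_neg NF_neg by blast
lemma CL_or: "LPclosed e x \<Longrightarrow> isOr e x \<theta>1 \<theta>2 \<Longrightarrow> LPclosed e \<theta>1 \<and> LPclosed e \<theta>2"
  unfolding LPclosed_def using LP_or NF_or by blast
lemma CL_atom:
  assumes "LPclosed e x" "isEqF e x t1 t2 \<or> isMemF e x t1 t2"
  shows "(\<exists>a. isConst e t1 a) \<and> (\<exists>b. isConst e t2 b)"
proof -
  have "isTerm e t1 \<and> isTerm e t2" using assms LP_atom unfolding LPclosed_def by blast
  moreover have "\<And>i. m_nat e i \<Longrightarrow> \<not> isVar e t1 i \<and> \<not> isVar e t2 i"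
    using assms NF_atom unfolding LPclosed_def by blast
  ultimately show ?thesis unfolding isTerm_def isVar_def by blast
qed

lemma triple_inj: "m_triple e q g x y \<Longrightarrow> m_triple e q g' x' y' \<Longrightarrow> g = g' \<and> x = x' \<and> y = y'"
  unfolding m_triple_def using pair_inj by metis

lemma SS_unf:
  assumes "ssubst e g \<phi> x"
  shows "\<exists>R. subst_closed e R \<and> isAssign e g \<and> (
      (\<exists>t1 t2 s1 s2. isEqF e \<phi> t1 t2 \<and> tsubst e g t1 s1 \<and> tsubst e g t2 s2 \<and> isEqF e x s1 s2)
     \<or> (\<exists>t1 t2 s1 s2. isMemF e \<phi> t1 t2 \<and> tsubst e g t1 s1 \<and> tsubst e g t2 s2 \<and> isMemF e x s1 s2)
     \<or> (\<exists>\<theta> \<theta>'. isNeg e \<phi> \<theta> \<and> isNeg e x \<theta>' \<and> inRel3 e R g \<theta> \<theta>')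
     \<or> (\<exists>\<theta>1 \<theta>2 \<theta>1' \<theta>2'. isOr e \<phi> \<theta>1 \<theta>2 \<and> isOr e x \<theta>1' \<theta>2'
            \<and> inRel3 e R g \<theta>1 \<theta>1' \<and> inRel3 e R g \<theta>2 \<theta>2')
     \<or> (\<exists>i \<theta> \<theta>' g'. isEx e \<phi> i \<theta> \<and> isEx e x i \<theta>' \<and> m_remove e g' g i
            \<and> inRel3 e R g' \<theta> \<theta>'))"
proof -
  obtain R q where R: "subst_closed e R" "m_triple e q g \<phi> x" "e q R"
    using assms unfolding ssubst_def inRel3_def by blast
  obtain g0 \<chi> \<chi>' where C: "m_triple e q g0 \<chi> \<chi>'" "isAssign e g0"
     "((\<exists>t1 t2 s1 s2. isEqF e \<chi> t1 t2 \<and> tsubst e g0 t1 s1 \<and> tsubst e g0 t2 s2 \<and> isEqF e \<chi>' s1 s2)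
     \<or> (\<exists>t1 t2 s1 s2. isMemF e \<chi> t1 t2 \<and> tsubst e g0 t1 s1 \<and> tsubst e g0 t2 s2 \<and> isMemF e \<chi>' s1 s2)
     \<or> (\<exists>\<theta> \<theta>'. isNeg e \<chi> \<theta> \<and> isNeg e \<chi>' \<theta>' \<and> inRel3 e R g0 \<theta> \<theta>')
     \<or> (\<exists>\<theta>1 \<theta>2 \<theta>1' \<theta>2'. isOr e \<chi> \<theta>1 \<theta>2 \<and> isOr e \<chi>' \<theta>1' \<theta>2'
            \<and> inRel3 e R g0 \<theta>1 \<theta>1' \<and> inRel3 e R g0 \<theta>2 \<theta>2')
     \<or> (\<exists>i \<theta> \<theta>' g'. isEx e \<chi> i \<theta> \<and> isEx e \<chi>' i \<theta>' \<and> m_remove e g' g0 i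
            \<and> inRel3 e R g' \<theta> \<theta>'))"
    using R(1)[unfolded subst_closed_def, rule_format, OF R(3)] by (elim exE conjE) (rule that; assumption)
  have eqs: "g0 = g" "\<chi> = \<phi>" "\<chi>' = x" using triple_inj[OF C(1) R(2)] by auto
  show ?thesis using R(1) C(2,3) unfolding eqs by blast
qed

lemma SS_assign: "ssubst e g \<phi> x \<Longrightarrow> isAssign e g" using SS_unf by blast

lemma inRel3_ss: "subst_closed e R \<Longrightarrow> inRel3 e R g \<theta> \<theta>' \<Longrightarrow> ssubst e g \<theta> \<theta>'"
  unfolding ssubst_def by blast

lemma SS_neg: "ssubst e g \<phi> x \<Longrightarrow> isNeg e x \<psi> \<Longrightarrow> \<exists>\<theta>. isNeg e \<phi> \<theta> \<and> ssubst e g \<theta> \<psi>"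
proof -
  assume a: "ssubst e g \<phi> x" "isNeg e x \<psi>"
  from SS_unf[OF a(1)] obtain R where R: "subst_closed e R" and D: "(\<exists>t1 t2 s1 s2. isEqF e \<phi> t1 t2 \<and> tsubst e g t1 s1 \<and> tsubst e g t2 s2 \<and> isEqF e x s1 s2)
     \<or> (\<exists>t1 t2 s1 s2. isMemF e \<phi> t1 t2 \<and> tsubst e g t1 s1 \<and> tsubst e g t2 s2 \<and> isMemF e x s1 s2)
     \<or> (\<exists>\<theta> \<theta>'. isNeg e \<phi> \<theta> \<and> isNeg e x \<theta>' \<and> inRel3 e R g \<theta> \<theta>')
     \<or> (\<exists>\<theta>1 \<theta>2 \<theta>1' \<theta>2'. isOr e \<phi> \<theta>1 \<theta>2 \<and> isOr e x \<theta>1' \<theta>2'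
            \<and> inRel3 e R g \<theta>1 \<theta>1' \<and> inRel3 e R g \<theta>2 \<theta>2')
     \<or> (\<exists>i \<theta> \<theta>' g'. isEx e \<phi> i \<theta> \<and> isEx e x i \<theta>' \<and> m_remove e g' g i
            \<and> inRel3 e R g' \<theta> \<theta>')" by blast
  from D show ?thesis
  proof (elim disjE exE conjE)
    fix \<theta> \<theta>' assume "isNeg e \<phi> \<theta>" "isNeg e x \<theta>'" "inRel3 e R g \<theta> \<theta>'"
    then show ?thesis using a(2) inj_syn(5) inRel3_ss[OF R] by metis
  qed (use a(2) distinct_syn in metis)+
qed

lemma SS_or: "ssubst e g \<phi> x \<Longrightarrow> isOr e x \<psi>1 \<psi>2 \<Longrightarrow>
   \<exists>\<theta>1 \<theta>2. isOr e \<phi> \<theta>1 \<theta>2 \<and> ssubst e g \<theta>1 \<psi>1 \<and> ssubst e g \<theta>2 \<psi>2"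
proof -
  assume a: "ssubst e g \<phi> x" "isOr e x \<psi>1 \<psi>2"
  from SS_unf[OF a(1)] obtain R where R: "subst_closed e R" and D: "(\<exists>t1 t2 s1 s2. isEqF e \<phi> t1 t2 \<and> tsubst e g t1 s1 \<and> tsubst e g t2 s2 \<and> isEqF e x s1 s2)
     \<or> (\<exists>t1 t2 s1 s2. isMemF e \<phi> t1 t2 \<and> tsubst e g t1 s1 \<and> tsubst e g t2 s2 \<and> isMemF e x s1 s2)
     \<or> (\<exists>\<theta> \<theta>'. isNeg e \<phi> \<theta> \<and> isNeg e x \<theta>' \<and> inRel3 e R g \<theta> \<theta>')
     \<or> (\<exists>\<theta>1 \<theta>2 \<theta>1' \<theta>2'. isOr e \<phi> \<theta>1 \<theta>2 \<and> isOr e x \<theta>1' \<theta>2'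
            \<and> inRel3 e R g \<theta>1 \<theta>1' \<and> inRel3 e R g \<theta>2 \<theta>2')
     \<or> (\<exists>i \<theta> \<theta>' g'. isEx e \<phi> i \<theta> \<and> isEx e x i \<theta>' \<and> m_remove e g' g i
            \<and> inRel3 e R g' \<theta> \<theta>')" by blast
  from D show ?thesis
  proof (elim disjE exE conjE)
    fix \<theta>1 \<theta>2 \<theta>1' \<theta>2' assume "isOr e \<phi> \<theta>1 \<theta>2" "isOr e x \<theta>1' \<theta>2'"
      "inRel3 e R g \<theta>1 \<theta>1'" "inRel3 e R g \<theta>2 \<theta>2'"
    then show ?thesis using a(2) inj_syn(6) inRel3_ss[OF R] by metis
  qed (use a(2) distinct_syn in metis)+
qed

lemma SS_ex: "ssubst e g \<phi> x \<Longrightarrow> isEx e x i \<psi> \<Longrightarrow>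
   \<exists>\<theta> g'. isEx e \<phi> i \<theta> \<and> m_remove e g' g i \<and> ssubst e g' \<theta> \<psi>"
proof -
  assume a: "ssubst e g \<phi> x" "isEx e x i \<psi>"
  from SS_unf[OF a(1)] obtain R where R: "subst_closed e R" and D: "(\<exists>t1 t2 s1 s2. isEqF e \<phi> t1 t2 \<and> tsubst e g t1 s1 \<and> tsubst e g t2 s2 \<and> isEqF e x s1 s2)
     \<or> (\<exists>t1 t2 s1 s2. isMemF e \<phi> t1 t2 \<and> tsubst e g t1 s1 \<and> tsubst e g t2 s2 \<and> isMemF e x s1 s2)
     \<or> (\<exists>\<theta> \<theta>'. isNeg e \<phi> \<theta> \<and> isNeg e x \<theta>' \<and> inRel3 e R g \<theta> \<theta>')
     \<or> (\<exists>\<theta>1 \<theta>2 \<theta>1' \<theta>2'. isOr e \<phi> \<theta>1 \<theta>2 \<and> isOr e x \<theta>1' \<theta>2'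
            \<and> inRel3 e R g \<theta>1 \<theta>1' \<and> inRel3 e R g \<theta>2 \<theta>2')
     \<or> (\<exists>i \<theta> \<theta>' g'. isEx e \<phi> i \<theta> \<and> isEx e x i \<theta>' \<and> m_remove e g' g i
            \<and> inRel3 e R g' \<theta> \<theta>')" by blast
  from D show ?thesis
  proof (elim disjE exE conjE)
    fix j \<theta> \<theta>' g' assume "isEx e \<phi> j \<theta>" "isEx e x j \<theta>'" "m_remove e g' g j" "inRel3 e R g' \<theta> \<theta>'"
    then show ?thesis using a(2) inj_syn(7) inRel3_ss[OF R] by metis
  qed (use a(2) distinct_syn in metis)+
qed

lemma HD_unf:
  assumes "hasDepth e \<phi> d"
  shows "\<exists>R. depth_closed e R \<and> m_nat e d \<and> (((\<exists>t1 t2. (isEqF e \<phi> t1 t2 \<or> isMemF e \<phi> t1 t2)) \<and> m_empty e d)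
     \<or> (\<exists>\<theta> d'. isNeg e \<phi> \<theta> \<and> inRel2 e R \<theta> d' \<and> m_succ e d d')
     \<or> (\<exists>\<theta>1 \<theta>2 d1 d2 u. isOr e \<phi> \<theta>1 \<theta>2 \<and> inRel2 e R \<theta>1 d1 \<and> inRel2 e R \<theta>2 d2
            \<and> m_union2 e u d1 d2 \<and> m_succ e d u)
     \<or> (\<exists>i \<theta> d'. isEx e \<phi> i \<theta> \<and> inRel2 e R \<theta> d' \<and> m_succ e d d'))"
proof -
  obtain R q where R: "depth_closed e R" "m_pair e q \<phi> d" "e q R"
    using assms unfolding hasDepth_def inRel2_def by blast
  obtain \<chi> d0 where C: "m_pair e q \<chi> d0" "m_nat e d0"
     "((\<exists>t1 t2. (isEqF e \<chi> t1 t2 \<or> isMemF e \<chi> t1 t2)) \<and> m_empty e d0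
     \<or> (\<exists>\<theta> d'. isNeg e \<chi> \<theta> \<and> inRel2 e R \<theta> d' \<and> m_succ e d0 d')
     \<or> (\<exists>\<theta>1 \<theta>2 d1 d2 u. isOr e \<chi> \<theta>1 \<theta>2 \<and> inRel2 e R \<theta>1 d1 \<and> inRel2 e R \<theta>2 d2
            \<and> m_union2 e u d1 d2 \<and> m_succ e d0 u)
     \<or> (\<exists>i \<theta> d'. isEx e \<chi> i \<theta> \<and> inRel2 e R \<theta> d' \<and> m_succ e d0 d'))"
    using R(1)[unfolded depth_closed_def, rule_format, OF R(3)] by (elim exE conjE) (rule that; assumption)
  have eqs: "\<chi> = \<phi>" "d0 = d" using pair_inj[OF C(1) R(2)] by auto
  show ?thesis using R(1) C(2,3) unfolding eqs by blast
qed

lemma inRel2_hd: "depth_closed e R \<Longrightarrow> inRel2 e R \<theta> d \<Longrightarrow> hasDepth e \<theta> d"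
  unfolding hasDepth_def by blast

lemma HD_nat: "hasDepth e \<phi> d \<Longrightarrow> m_nat e d" using HD_unf by blast

lemma HD_neg: "hasDepth e \<phi> d \<Longrightarrow> isNeg e \<phi> \<theta> \<Longrightarrow> \<exists>d'. hasDepth e \<theta> d' \<and> m_succ e d d'"
proof -
  assume a: "hasDepth e \<phi> d" "isNeg e \<phi> \<theta>"
  from HD_unf[OF a(1)] obtain R where R: "depth_closed e R" and D: "(((\<exists>t1 t2. (isEqF e \<phi> t1 t2 \<or> isMemF e \<phi> t1 t2)) \<and> m_empty e d)
     \<or> (\<exists>\<theta> d'. isNeg e \<phi> \<theta> \<and> inRel2 e R \<theta> d' \<and> m_succ e d d')
     \<or> (\<exists>\<theta>1 \<theta>2 d1 d2 u. isOr e \<phi> \<theta>1 \<theta>2 \<and> inRel2 e R \<theta>1 d1 \<and> inRel2 e R \<theta>2 d2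
            \<and> m_union2 e u d1 d2 \<and> m_succ e d u)
     \<or> (\<exists>i \<theta> d'. isEx e \<phi> i \<theta> \<and> inRel2 e R \<theta> d' \<and> m_succ e d d'))" by blast
  from D show ?thesis
  proof (elim disjE exE conjE)
    fix \<theta>' d' assume "isNeg e \<phi> \<theta>'" "inRel2 e R \<theta>' d'" "m_succ e d d'"
    then show ?thesis using a(2) inj_syn(5) inRel2_hd[OF R] by metis
  qed (use a(2) distinct_syn in metis)+
qed

lemma HD_or: "hasDepth e \<phi> d \<Longrightarrow> isOr e \<phi> \<theta>1 \<theta>2 \<Longrightarrow>
   \<exists>d1 d2 u. hasDepth e \<theta>1 d1 \<and> hasDepth e \<theta>2 d2 \<and> m_union2 e u d1 d2 \<and> m_succ e d u"
proof -
  assume a: "hasDepth e \<phi> d" "isOr e \<phi> \<theta>1 \<theta>2"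
  from HD_unf[OF a(1)] obtain R where R: "depth_closed e R" and D: "(((\<exists>t1 t2. (isEqF e \<phi> t1 t2 \<or> isMemF e \<phi> t1 t2)) \<and> m_empty e d)
     \<or> (\<exists>\<theta> d'. isNeg e \<phi> \<theta> \<and> inRel2 e R \<theta> d' \<and> m_succ e d d')
     \<or> (\<exists>\<theta>1 \<theta>2 d1 d2 u. isOr e \<phi> \<theta>1 \<theta>2 \<and> inRel2 e R \<theta>1 d1 \<and> inRel2 e R \<theta>2 d2
            \<and> m_union2 e u d1 d2 \<and> m_succ e d u)
     \<or> (\<exists>i \<theta> d'. isEx e \<phi> i \<theta> \<and> inRel2 e R \<theta> d' \<and> m_succ e d d'))" by blast
  from D show ?thesis
  proof (elim disjE exE conjE)
    fix \<theta>1' \<theta>2' d1 d2 u assume "isOr e \<phi> \<theta>1' \<theta>2'" "inRel2 e R \<theta>1' d1" "inRel2 e R \<theta>2' d2"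
      "m_union2 e u d1 d2" "m_succ e d u"
    then show ?thesis using a(2) inj_syn(6) inRel2_hd[OF R] by metis
  qed (use a(2) distinct_syn in metis)+
qed

lemma HD_ex: "hasDepth e \<phi> d \<Longrightarrow> isEx e \<phi> i \<theta> \<Longrightarrow> \<exists>d'. hasDepth e \<theta> d' \<and> m_succ e d d'"
proof -
  assume a: "hasDepth e \<phi> d" "isEx e \<phi> i \<theta>"
  from HD_unf[OF a(1)] obtain R where R: "depth_closed e R" and D: "(((\<exists>t1 t2. (isEqF e \<phi> t1 t2 \<or> isMemF e \<phi> t1 t2)) \<and> m_empty e d)
     \<or> (\<exists>\<theta> d'. isNeg e \<phi> \<theta> \<and> inRel2 e R \<theta> d' \<and> m_succ e d d')
     \<or> (\<exists>\<theta>1 \<theta>2 d1 d2 u. isOr e \<phi> \<theta>1 \<theta>2 \<and> inRel2 e R \<theta>1 d1 \<and> inRel2 e R \<theta>2 d2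
            \<and> m_union2 e u d1 d2 \<and> m_succ e d u)
     \<or> (\<exists>i \<theta> d'. isEx e \<phi> i \<theta> \<and> inRel2 e R \<theta> d' \<and> m_succ e d d'))" by blast
  from D show ?thesis
  proof (elim disjE exE conjE)
    fix j \<theta>' d' assume "isEx e \<phi> j \<theta>'" "inRel2 e R \<theta>' d'" "m_succ e d d'"
    then show ?thesis using a(2) inj_syn(7) inRel2_hd[OF R] by metis
  qed (use a(2) distinct_syn in metis)+
qed

end

context gbm begin

definition isU :: "'a \<Rightarrow> 'a \<Rightarrow> bool" where "isU U X \<equiv> \<forall>z. e z U \<longleftrightarrow> (\<exists>y. e y X \<and> e z y)"
definition isP :: "'a \<Rightarrow> 'a \<Rightarrow> bool" where "isP P X \<equiv> \<forall>z. e z P \<longleftrightarrow> (\<forall>w. e w z \<longrightarrow> e w X)"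

lemma isU_ex: "\<exists>U. isU U X" unfolding isU_def using ax_union by blast
lemma isP_ex: "\<exists>P. isP P X" unfolding isP_def using ax_power by blast

lemma pair_in_pp:
  assumes "e a X" "e b X" "m_pair e p a b" "isP P1 X" "isP P2 P1"
  shows "e p P2"
proof -
  obtain u w where uw: "m_upair e u a a" "m_upair e w a b" "m_upair e p u w"
    using assms(3) unfolding m_pair_def by blast
  have "e u P1" using uw(1) assms(1,4) unfolding isP_def m_upair_def by auto
  moreover have "e w P1" using uw(2) assms(1,2,4) unfolding isP_def m_upair_def by auto
  ultimately show ?thesis using uw(3) assms(5) unfolding isP_def m_upair_def by auto
qed

lemma pair_bound:
  assumes "e p X" "m_pair e p a b" "isU U1 X" "isU U2 U1"
  shows "e a U2 \<and> e b U2"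
proof -
  obtain u w where uw: "m_upair e u a a" "m_upair e w a b" "m_upair e p u w"
    using assms(2) unfolding m_pair_def by blast
  have "e u U1" "e w U1" using uw(3) assms(1,3) unfolding isU_def m_upair_def by auto
  then show ?thesis using uw(1,2) assms(4) unfolding isU_def m_upair_def by auto
qed

lemma triple_bound:
  assumes "e q R" "m_triple e q g x y" "isU U1 R" "isU U2 U1" "isU U3 U2" "isU U4 U3"
  shows "e g U2 \<and> (\<forall>z. e z g \<longrightarrow> e z U3) \<and> e x U4 \<and> e y U4"
proof -
  obtain r where r: "m_pair e r x y" "m_pair e q g r" using assms(2) unfolding m_triple_def by blast
  have "e g U2" "e r U2" using pair_bound[OF assms(1) r(2) assms(3,4)] by auto
  moreover have "e x U4 \<and> e y U4" using pair_bound[OF \<open>e r U2\<close> r(1) assms(5,6)] .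
  moreover have "\<forall>z. e z g \<longrightarrow> e z U3" using \<open>e g U2\<close> assms(5) unfolding isU_def by blast
  ultimately show ?thesis by blast
qed

lemma bsep: "A \<in> Cl \<Longrightarrow> (\<forall>x. x \<in> A \<longrightarrow> e x W) \<Longrightarrow> \<exists>y. \<forall>z. e z y \<longleftrightarrow> z \<in> A"
  using ax_sep by blast

definition ddisj :: "'a \<Rightarrow> 'a \<Rightarrow> bool" where
  "ddisj h1 h2 \<equiv> \<forall>i a b p q. m_pair e p i a \<and> e p h1 \<and> m_pair e q i b \<and> e q h2 \<longrightarrow> False"

lemma Def_ddisj: "Def e Cl (\<lambda>s. ddisj (s i) (s j))"
  unfolding ddisj_def by (intro Def_basic Def_syn0)

lemma tsubst_comp:
  assumes t1: "tsubst e h1 t s" and t2: "tsubst e h2 s r" and u: "m_union2 e h h1 h2"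
  shows "tsubst e h t r"
proof -
  have hc: "\<And>p. e p h \<longleftrightarrow> e p h1 \<or> e p h2" using u unfolding m_union2_def by blast
  from t1 show ?thesis unfolding tsubst_def
  proof (elim disjE exE conjE)
    fix i a p assume A: "isVar e t i" "m_pair e p i a" "e p h1" "isConst e s a"
    from t2 have "r = s" unfolding tsubst_def using A(4) distinct_syn0 by blast
    then show "(\<exists>i a p. isVar e t i \<and> m_pair e p i a \<and> e p h \<and> isConst e r a) \<or>
      isTerm e t \<and> \<not> (\<exists>i a p. isVar e t i \<and> m_pair e p i a \<and> e p h) \<and> r = t"
      using A hc by blast
  next
    assume B: "isTerm e t" "\<not> (\<exists>i a p. isVar e t i \<and> m_pair e p i a \<and> e p h1)" "s = t"
    from t2 show "(\<exists>i a p. isVar e t i \<and> m_pair e p i a \<and> e p h \<and> isConst e r a) \<or>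
      isTerm e t \<and> \<not> (\<exists>i a p. isVar e t i \<and> m_pair e p i a \<and> e p h) \<and> r = t"
      unfolding tsubst_def B(3) using B(1,2) hc by blast
  qed
qed


lemma SC_unf:
  assumes R: "subst_closed e R" and i: "inRel3 e R g \<phi> x"
  shows "isAssign e g \<and> ((\<exists>t1 t2 s1 s2. isEqF e \<phi> t1 t2 \<and> tsubst e g t1 s1 \<and> tsubst e g t2 s2 \<and> isEqF e x s1 s2)
     \<or> (\<exists>t1 t2 s1 s2. isMemF e \<phi> t1 t2 \<and> tsubst e g t1 s1 \<and> tsubst e g t2 s2 \<and> isMemF e x s1 s2)
     \<or> (\<exists>\<theta> \<theta>'. isNeg e \<phi> \<theta> \<and> isNeg e x \<theta>' \<and> inRel3 e R g \<theta> \<theta>')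
     \<or> (\<exists>\<theta>1 \<theta>2 \<theta>1' \<theta>2'. isOr e \<phi> \<theta>1 \<theta>2 \<and> isOr e x \<theta>1' \<theta>2'
            \<and> inRel3 e R g \<theta>1 \<theta>1' \<and> inRel3 e R g \<theta>2 \<theta>2')
     \<or> (\<exists>i \<theta> \<theta>' g'. isEx e \<phi> i \<theta> \<and> isEx e x i \<theta>' \<and> m_remove e g' g i
            \<and> inRel3 e R g' \<theta> \<theta>'))"
proof -
  obtain q where q: "m_triple e q g \<phi> x" "e q R" using i unfolding inRel3_def by blast
  obtain g0 \<chi> \<chi>' where C: "m_triple e q g0 \<chi> \<chi>'" "isAssign e g0"
     "((\<exists>t1 t2 s1 s2. isEqF e \<chi> t1 t2 \<and> tsubst e g0 t1 s1 \<and> tsubst e g0 t2 s2 \<and> isEqF e \<chi>' s1 s2)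
     \<or> (\<exists>t1 t2 s1 s2. isMemF e \<chi> t1 t2 \<and> tsubst e g0 t1 s1 \<and> tsubst e g0 t2 s2 \<and> isMemF e \<chi>' s1 s2)
     \<or> (\<exists>\<theta> \<theta>'. isNeg e \<chi> \<theta> \<and> isNeg e \<chi>' \<theta>' \<and> inRel3 e R g0 \<theta> \<theta>')
     \<or> (\<exists>\<theta>1 \<theta>2 \<theta>1' \<theta>2'. isOr e \<chi> \<theta>1 \<theta>2 \<and> isOr e \<chi>' \<theta>1' \<theta>2'
            \<and> inRel3 e R g0 \<theta>1 \<theta>1' \<and> inRel3 e R g0 \<theta>2 \<theta>2')
     \<or> (\<exists>i \<theta> \<theta>' g'. isEx e \<chi> i \<theta> \<and> isEx e \<chi>' i \<theta>' \<and> m_remove e g' g0 i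
            \<and> inRel3 e R g' \<theta> \<theta>'))"
    using R[unfolded subst_closed_def, rule_format, OF q(2)] by (elim exE conjE) (rule that; assumption)
  have eqs: "g0 = g" "\<chi> = \<phi>" "\<chi>' = x" using triple_inj[OF C(1) q(1)] by auto
  show ?thesis using C(2,3) unfolding eqs by blast
qed

lemma triple_ex: "\<exists>q. m_triple e q g x y"
  unfolding m_triple_def using pair_ex by blast

lemma union2_ex': "\<exists>u. \<forall>z. e z u \<longleftrightarrow> e z x \<or> e z y"
  using union2_ex unfolding m_union2_def by blast

lemma assign_union:
  assumes "isAssign e h1" "isAssign e h2" "ddisj h1 h2" "m_union2 e h h1 h2"
  shows "isAssign e h"
  using assms unfolding isAssign_def ddisj_def m_union2_def by metis

lemma remove_union:
  assumes "m_remove e h1' h1 j" "m_remove e h2' h2 j" "m_union2 e h h1 h2" "m_union2 e g' h1' h2'"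
  shows "m_remove e g' h j"
  using assms unfolding m_remove_def m_union2_def by blast

lemma ddisj_remove:
  assumes "ddisj h1 h2" "m_remove e h1' h1 j" "m_remove e h2' h2 j"
  shows "ddisj h1' h2'"
  using assms unfolding m_remove_def ddisj_def by blast

lemma ss_comp:
  assumes s1: "ssubst e h1 \<theta> \<psi>" and s2: "ssubst e h2 \<psi> y" and dj: "ddisj h1 h2"
    and u: "m_union2 e h h1 h2"
  shows "ssubst e h \<theta> y"
proof -
  obtain R1 where R1: "subst_closed e R1" "inRel3 e R1 h1 \<theta> \<psi>" using s1 unfolding ssubst_def by blast
  obtain R2 where R2: "subst_closed e R2" "inRel3 e R2 h2 \<psi> y" using s2 unfolding ssubst_def by blast
  define Mem where "Mem = (\<lambda>q R1 R2. \<exists>h h1 h2 \<chi> \<chi>' \<chi>''. m_triple e q h \<chi> \<chi>'' \<and> m_union2 e h h1 h2 \<and> ddisj h1 h2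
      \<and> inRel3 e R1 h1 \<chi> \<chi>' \<and> inRel3 e R2 h2 \<chi>' \<chi>'')"
  have "Def e Cl (\<lambda>s. Mem (s 0) (s 1) (s 2))" unfolding Mem_def
    by (intro Def_basic Def_syn0 Def_triple Def_inRel3 Def_ddisj)
  then have Acl: "{q. Mem q R1 R2} \<in> Cl" by (rule cl3)
  obtain U1a U2a U3a U4a where Ua: "isU U1a R1" "isU U2a U1a" "isU U3a U2a" "isU U4a U3a" using isU_ex by metis
  obtain U1b U2b U3b U4b where Ub: "isU U1b R2" "isU U2b U1b" "isU U3b U2b" "isU U4b U3b" using isU_ex by metis
  obtain W1 where W1: "\<forall>z. e z W1 \<longleftrightarrow> e z U3a \<or> e z U4a" using union2_ex' by blast
  obtain W2 where W2: "\<forall>z. e z W2 \<longleftrightarrow> e z U3b \<or> e z U4b" using union2_ex' by blast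
  obtain W where W: "\<forall>z. e z W \<longleftrightarrow> e z W1 \<or> e z W2" using union2_ex' by blast
  obtain PW where PW: "isP PW W" using isP_ex by blast
  obtain W' where W': "\<forall>z. e z W' \<longleftrightarrow> e z W \<or> e z PW" using union2_ex' by blast
  obtain P1 where P1: "isP P1 W'" using isP_ex by blast
  obtain P2 where P2: "isP P2 P1" using isP_ex by blast
  obtain W'' where W'': "\<forall>z. e z W'' \<longleftrightarrow> e z W' \<or> e z P2" using union2_ex' by blast
  obtain Q1 where Q1: "isP Q1 W''" using isP_ex by blast
  obtain Q2 where Q2: "isP Q2 Q1" using isP_ex by blast
  have bound: "\<forall>q. q \<in> {q. Mem q R1 R2} \<longrightarrow> e q Q2"
  proof (intro allI impI)
    fix q assume "q \<in> {q. Mem q R1 R2}"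
    then obtain h h1 h2 \<chi> \<chi>' \<chi>'' where M: "m_triple e q h \<chi> \<chi>''" "m_union2 e h h1 h2"
      "inRel3 e R1 h1 \<chi> \<chi>'" "inRel3 e R2 h2 \<chi>' \<chi>''" unfolding Mem_def by blast
    obtain q1 where q1: "m_triple e q1 h1 \<chi> \<chi>'" "e q1 R1" using M(3) unfolding inRel3_def by blast
    obtain q2 where q2: "m_triple e q2 h2 \<chi>' \<chi>''" "e q2 R2" using M(4) unfolding inRel3_def by blast
    have b1: "(\<forall>z. e z h1 \<longrightarrow> e z U3a) \<and> e \<chi> U4a" using triple_bound[OF q1(2) q1(1) Ua] by blast
    have b2: "(\<forall>z. e z h2 \<longrightarrow> e z U3b) \<and> e \<chi>'' U4b" using triple_bound[OF q2(2) q2(1) Ub] by blast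
    have hW: "\<forall>z. e z h \<longrightarrow> e z W" using b1 b2 M(2) W W1 W2 unfolding m_union2_def by blast
    then have "e h PW" using PW unfolding isP_def by blast
    then have hW': "e h W'" using W' by blast
    have "e \<chi> W'" "e \<chi>'' W'" using b1 b2 W W1 W2 W' by blast+
    obtain r where r: "m_pair e r \<chi> \<chi>''" "m_pair e q h r" using M(1) unfolding m_triple_def by blast
    have "e r P2" using pair_in_pp[OF \<open>e \<chi> W'\<close> \<open>e \<chi>'' W'\<close> r(1) P1 P2] .
    then have "e r W''" using W'' by blast
    moreover have "e h W''" using hW' W'' by blast
    ultimately show "e q Q2" using pair_in_pp[OF _ _ r(2) Q1 Q2] by blast
  qed
  obtain R where R: "\<forall>z. e z R \<longleftrightarrow> z \<in> {q. Mem q R1 R2}" using bsep[OF Acl bound] by blast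
  have memR: "inRel3 e R g a c" if "m_union2 e g g1 g2" "ddisj g1 g2" "inRel3 e R1 g1 a b" "inRel3 e R2 g2 b c"
    for g g1 g2 a b c
  proof -
    obtain q where q: "m_triple e q g a c" using triple_ex by blast
    then have "Mem q R1 R2" unfolding Mem_def using that by blast
    then show ?thesis unfolding inRel3_def using q R by blast
  qed
  have "subst_closed e R"
    unfolding subst_closed_def
  proof (intro allI impI)
    fix q assume "e q R"
    then obtain g g1 g2 \<chi> \<chi>' \<chi>'' where M: "m_triple e q g \<chi> \<chi>''" "m_union2 e g g1 g2" "ddisj g1 g2"
      "inRel3 e R1 g1 \<chi> \<chi>'" "inRel3 e R2 g2 \<chi>' \<chi>''" using R unfolding Mem_def by blast
    have C1: "isAssign e g1 \<and> ((\<exists>t1 t2 s1 s2. isEqF e \<chi> t1 t2 \<and> tsubst e g1 t1 s1 \<and> tsubst e g1 t2 s2 \<and> isEqF e \<chi>' s1 s2)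
     \<or> (\<exists>t1 t2 s1 s2. isMemF e \<chi> t1 t2 \<and> tsubst e g1 t1 s1 \<and> tsubst e g1 t2 s2 \<and> isMemF e \<chi>' s1 s2)
     \<or> (\<exists>\<theta> \<theta>'. isNeg e \<chi> \<theta> \<and> isNeg e \<chi>' \<theta>' \<and> inRel3 e R1 g1 \<theta> \<theta>')
     \<or> (\<exists>\<theta>1 \<theta>2 \<theta>1' \<theta>2'. isOr e \<chi> \<theta>1 \<theta>2 \<and> isOr e \<chi>' \<theta>1' \<theta>2'
            \<and> inRel3 e R1 g1 \<theta>1 \<theta>1' \<and> inRel3 e R1 g1 \<theta>2 \<theta>2')
     \<or> (\<exists>i \<theta> \<theta>' g'. isEx e \<chi> i \<theta> \<and> isEx e \<chi>' i \<theta>' \<and> m_remove e g' g1 i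
            \<and> inRel3 e R1 g' \<theta> \<theta>'))" using SC_unf[OF R1(1) M(4)] .
    have C2: "isAssign e g2 \<and> ((\<exists>t1 t2 s1 s2. isEqF e \<chi>' t1 t2 \<and> tsubst e g2 t1 s1 \<and> tsubst e g2 t2 s2 \<and> isEqF e \<chi>'' s1 s2)
     \<or> (\<exists>t1 t2 s1 s2. isMemF e \<chi>' t1 t2 \<and> tsubst e g2 t1 s1 \<and> tsubst e g2 t2 s2 \<and> isMemF e \<chi>'' s1 s2)
     \<or> (\<exists>\<theta> \<theta>'. isNeg e \<chi>' \<theta> \<and> isNeg e \<chi>'' \<theta>' \<and> inRel3 e R2 g2 \<theta> \<theta>')
     \<or> (\<exists>\<theta>1 \<theta>2 \<theta>1' \<theta>2'. isOr e \<chi>' \<theta>1 \<theta>2 \<and> isOr e \<chi>'' \<theta>1' \<theta>2'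
            \<and> inRel3 e R2 g2 \<theta>1 \<theta>1' \<and> inRel3 e R2 g2 \<theta>2 \<theta>2')
     \<or> (\<exists>i \<theta> \<theta>' g'. isEx e \<chi>' i \<theta> \<and> isEx e \<chi>'' i \<theta>' \<and> m_remove e g' g2 i
            \<and> inRel3 e R2 g' \<theta> \<theta>'))" using SC_unf[OF R2(1) M(5)] .
    have asg: "isAssign e g" using assign_union C1 C2 M(2,3) by blast
    have "((\<exists>t1 t2 s1 s2. isEqF e \<chi> t1 t2 \<and> tsubst e g t1 s1 \<and> tsubst e g t2 s2 \<and> isEqF e \<chi>'' s1 s2)
     \<or> (\<exists>t1 t2 s1 s2. isMemF e \<chi> t1 t2 \<and> tsubst e g t1 s1 \<and> tsubst e g t2 s2 \<and> isMemF e \<chi>'' s1 s2)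
     \<or> (\<exists>\<theta> \<theta>'. isNeg e \<chi> \<theta> \<and> isNeg e \<chi>'' \<theta>' \<and> inRel3 e R g \<theta> \<theta>')
     \<or> (\<exists>\<theta>1 \<theta>2 \<theta>1' \<theta>2'. isOr e \<chi> \<theta>1 \<theta>2 \<and> isOr e \<chi>'' \<theta>1' \<theta>2'
            \<and> inRel3 e R g \<theta>1 \<theta>1' \<and> inRel3 e R g \<theta>2 \<theta>2')
     \<or> (\<exists>i \<theta> \<theta>' g'. isEx e \<chi> i \<theta> \<and> isEx e \<chi>'' i \<theta>' \<and> m_remove e g' g i
            \<and> inRel3 e R g' \<theta> \<theta>'))"
    proof -
      from conjunct2[OF C1] show ?thesis
      proof (elim disjE exE conjE)
        fix t1 t2 s1 s2 assume A: "isEqF e \<chi> t1 t2" "tsubst e g1 t1 s1" "tsubst e g1 t2 s2" "isEqF e \<chi>' s1 s2"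
        from conjunct2[OF C2] show ?thesis
        proof (elim disjE exE conjE)
          fix t1' t2' r1 r2 assume B: "isEqF e \<chi>' t1' t2'" "tsubst e g2 t1' r1" "tsubst e g2 t2' r2" "isEqF e \<chi>'' r1 r2"
          have "t1' = s1" "t2' = s2" using inj_syn(3)[OF A(4) B(1)] by auto
          then have "tsubst e g t1 r1" "tsubst e g t2 r2" using tsubst_comp A B M(2) by blast+
          then show ?thesis using A(1) B(4) by blast
        qed (use A(4) distinct_syn in metis)+
      next
        fix t1 t2 s1 s2 assume A: "isMemF e \<chi> t1 t2" "tsubst e g1 t1 s1" "tsubst e g1 t2 s2" "isMemF e \<chi>' s1 s2"
        from conjunct2[OF C2] show ?thesis
        proof (elim disjE exE conjE)
          fix t1' t2' r1 r2 assume B: "isMemF e \<chi>' t1' t2'" "tsubst e g2 t1' r1" "tsubst e g2 t2' r2" "isMemF e \<chi>'' r1 r2"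
          have "t1' = s1" "t2' = s2" using inj_syn(4)[OF A(4) B(1)] by auto
          then have "tsubst e g t1 r1" "tsubst e g t2 r2" using tsubst_comp A B M(2) by blast+
          then show ?thesis using A(1) B(4) by blast
        qed (use A(4) distinct_syn in metis)+
      next
        fix \<theta> \<theta>' assume A: "isNeg e \<chi> \<theta>" "isNeg e \<chi>' \<theta>'" "inRel3 e R1 g1 \<theta> \<theta>'"
        from conjunct2[OF C2] show ?thesis
        proof (elim disjE exE conjE)
          fix \<eta> \<eta>' assume B: "isNeg e \<chi>' \<eta>" "isNeg e \<chi>'' \<eta>'" "inRel3 e R2 g2 \<eta> \<eta>'"
          have "\<eta> = \<theta>'" using inj_syn(5)[OF A(2) B(1)] by auto
          then have "inRel3 e R g \<theta> \<eta>'" using memR[OF M(2,3) A(3)] B(3) by blast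
          then show ?thesis using A(1) B(2) by blast
        qed (use A(2) distinct_syn in metis)+
      next
        fix \<theta>1 \<theta>2 \<theta>1' \<theta>2' assume A: "isOr e \<chi> \<theta>1 \<theta>2" "isOr e \<chi>' \<theta>1' \<theta>2'"
          "inRel3 e R1 g1 \<theta>1 \<theta>1'" "inRel3 e R1 g1 \<theta>2 \<theta>2'"
        from conjunct2[OF C2] show ?thesis
        proof (elim disjE exE conjE)
          fix \<eta>1 \<eta>2 \<eta>1' \<eta>2' assume B: "isOr e \<chi>' \<eta>1 \<eta>2" "isOr e \<chi>'' \<eta>1' \<eta>2'"
            "inRel3 e R2 g2 \<eta>1 \<eta>1'" "inRel3 e R2 g2 \<eta>2 \<eta>2'"
          have "\<eta>1 = \<theta>1'" "\<eta>2 = \<theta>2'" using inj_syn(6)[OF A(2) B(1)] by auto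
          then have "inRel3 e R g \<theta>1 \<eta>1'" "inRel3 e R g \<theta>2 \<eta>2'"
            using memR[OF M(2,3) A(3)] memR[OF M(2,3) A(4)] B(3,4) by blast+
          then show ?thesis using A(1) B(2) by blast
        qed (use A(2) distinct_syn in metis)+
      next
        fix j \<theta> \<theta>' g1' assume A: "isEx e \<chi> j \<theta>" "isEx e \<chi>' j \<theta>'" "m_remove e g1' g1 j"
          "inRel3 e R1 g1' \<theta> \<theta>'"
        from conjunct2[OF C2] show ?thesis
        proof (elim disjE exE conjE)
          fix j2 \<eta> \<eta>' g2' assume B: "isEx e \<chi>' j2 \<eta>" "isEx e \<chi>'' j2 \<eta>'" "m_remove e g2' g2 j2"
            "inRel3 e R2 g2' \<eta> \<eta>'"
          have jj: "j2 = j" "\<eta> = \<theta>'" using inj_syn(7)[OF A(2) B(1)] by auto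
          obtain g' where g': "m_union2 e g' g1' g2'" using union2_ex by blast
          have "m_remove e g' g j" using remove_union[OF A(3) B(3)[unfolded jj] M(2) g'] .
          moreover have "ddisj g1' g2'" using ddisj_remove[OF M(3) A(3) B(3)[unfolded jj]] .
          then have "inRel3 e R g' \<theta> \<eta>'" using memR[OF g' _ A(4)] B(4)[unfolded jj] by blast
          ultimately show ?thesis using A(1) B(2)[unfolded jj] by blast
        qed (use A(2) distinct_syn in metis)+
      qed
    qed
    then show "\<exists>g \<chi> \<chi>'. m_triple e q g \<chi> \<chi>' \<and> isAssign e g \<and> ((\<exists>t1 t2 s1 s2. isEqF e \<chi> t1 t2 \<and> tsubst e g t1 s1 \<and> tsubst e g t2 s2 \<and> isEqF e \<chi>' s1 s2)
     \<or> (\<exists>t1 t2 s1 s2. isMemF e \<chi> t1 t2 \<and> tsubst e g t1 s1 \<and> tsubst e g t2 s2 \<and> isMemF e \<chi>' s1 s2)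
     \<or> (\<exists>\<theta> \<theta>'. isNeg e \<chi> \<theta> \<and> isNeg e \<chi>' \<theta>' \<and> inRel3 e R g \<theta> \<theta>')
     \<or> (\<exists>\<theta>1 \<theta>2 \<theta>1' \<theta>2'. isOr e \<chi> \<theta>1 \<theta>2 \<and> isOr e \<chi>' \<theta>1' \<theta>2'
            \<and> inRel3 e R g \<theta>1 \<theta>1' \<and> inRel3 e R g \<theta>2 \<theta>2')
     \<or> (\<exists>i \<theta> \<theta>' g'. isEx e \<chi> i \<theta> \<and> isEx e \<chi>' i \<theta>' \<and> m_remove e g' g i
            \<and> inRel3 e R g' \<theta> \<theta>'))"
      using M(1) asg by (intro exI conjI) assumption+
  qed
  moreover have "inRel3 e R h \<theta> y" using memR[OF u dj R1(2) R2(2)] .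
  ultimately show ?thesis unfolding ssubst_def by blast
qed

end

context gbm begin

lemma nat_empty: "m_empty e z \<Longrightarrow> m_nat e z"
  unfolding m_nat_def m_ord_def m_transitive_def m_empty_def by simp

lemma nat_succ: "m_nat e n \<Longrightarrow> m_succ e y n \<Longrightarrow> m_nat e y"
proof -
  assume n: "m_nat e n" and y: "m_succ e y n"
  have yc: "\<And>w. e w y \<longleftrightarrow> e w n \<or> w = n" using y unfolding m_succ_def by blast
  have tn: "m_transitive e n" using n unfolding m_nat_def m_ord_def by blast
  have te: "\<And>w. e w n \<Longrightarrow> m_transitive e w" using n unfolding m_nat_def m_ord_def by blast
  have se: "\<And>m. m = n \<or> e m n \<Longrightarrow> m_empty e m \<or> (\<exists>k. m_succ e m k)" using n unfolding m_nat_def by blast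
  have "m_transitive e y" unfolding m_transitive_def
  proof (intro allI impI)
    fix v w assume "e w v \<and> e v y"
    then show "e w y" using yc tn unfolding m_transitive_def by blast
  qed
  moreover have "\<forall>w. e w y \<longrightarrow> m_transitive e w" using yc te tn by blast
  moreover have "\<forall>m. (m = y \<or> e m y) \<longrightarrow> m_empty e m \<or> (\<exists>k. m_succ e m k)"
  proof (intro allI impI)
    fix m assume "m = y \<or> e m y"
    then show "m_empty e m \<or> (\<exists>k. m_succ e m k)"
    proof
      assume "m = y" then show ?thesis using y by blast
    next
      assume "e m y" then have "m = n \<or> e m n" using yc by blast
      then show ?thesis using se by blast
    qed
  qed
  ultimately show ?thesis unfolding m_nat_def m_ord_def by blast
qed

lemma sing_ex: "\<exists>S. \<forall>z. e z S \<longleftrightarrow> z = x"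
  using ax_pair unfolding m_upair_def by blast

definition atomk :: "nat \<Rightarrow> 'a \<Rightarrow> 'a \<Rightarrow> 'a \<Rightarrow> bool" where
  "atomk k p t1 t2 \<equiv> isTerm e t1 \<and> isTerm e t2 \<and> m_tag2 e k p t1 t2"

lemma atomk_cases: "isEqF e p t1 t2 \<or> isMemF e p t1 t2 \<Longrightarrow> \<exists>k\<in>{2,3}. atomk k p t1 t2"
  unfolding isEqF_def isMemF_def atomk_def by auto

lemma atomk_iff: "k \<in> {2,3} \<Longrightarrow> atomk k p t1 t2 \<Longrightarrow> isEqF e p t1 t2 \<or> isMemF e p t1 t2"
  unfolding isEqF_def isMemF_def atomk_def by auto

lemma atom_rep_k:
  assumes k: "k \<in> {2,3}" and ta: "isConst e ta a" and tb: "isConst e tb b" and p: "atomk k p ta tb"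
  shows "\<exists>\<phi> g z. LZFformula e \<phi> \<and> isAssign e g \<and> ssubst e g \<phi> p \<and> hasDepth e \<phi> z \<and> m_empty e z"
proof -
  obtain z where z: "m_empty e z" using empty_ex by blast
  obtain o1 where o1: "m_succ e o1 z" using succ_ex by blast
  have nz: "m_nat e z" using nat_empty[OF z] .
  have no: "m_nat e o1" using nat_succ[OF nz o1] .
  have zo: "z \<noteq> o1" using z o1 unfolding m_empty_def m_succ_def by blast
  obtain v0 where v0: "m_tag e 0 v0 z" using tag_ex by blast
  obtain v1 where v1: "m_tag e 0 v1 o1" using tag_ex by blast
  have iv0: "isVar e v0 z" using v0 nz unfolding isVar_def by blast
  have iv1: "isVar e v1 o1" using v1 no unfolding isVar_def by blast
  obtain \<phi> where \<phi>: "m_tag2 e k \<phi> v0 v1" using tag2_ex by blast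
  have a\<phi>: "atomk k \<phi> v0 v1" using \<phi> iv0 iv1 unfolding atomk_def isTerm_def by blast
  have a\<phi>': "isEqF e \<phi> v0 v1 \<or> isMemF e \<phi> v0 v1" using atomk_iff[OF k a\<phi>] .
  obtain S where S: "\<forall>w. e w S \<longleftrightarrow> w = \<phi>" using sing_ex by blast
  have "form_closed e (\<lambda>t. \<exists>i. isVar e t i) S" unfolding form_closed_def
  proof (intro allI impI, rule disjI1)
    fix \<chi> assume "e \<chi> S"
    then have c: "\<chi> = \<phi>" using S by blast
    show "\<exists>t1 t2. (isEqF e \<chi> t1 t2 \<or> isMemF e \<chi> t1 t2) \<and> (\<exists>i. isVar e t1 i) \<and> (\<exists>i. isVar e t2 i)"
      using c a\<phi>' iv0 iv1 by blast
  qed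
  then have "LZFformula e \<phi>" unfolding LZFformula_def using S by blast
  moreover
  obtain q where q: "m_pair e q \<phi> z" using pair_ex by blast
  obtain RD where RD: "\<forall>w. e w RD \<longleftrightarrow> w = q" using sing_ex by blast
  have "depth_closed e RD" unfolding depth_closed_def
  proof (intro allI impI)
    fix w assume "e w RD"
    then have c: "w = q" using RD by blast
    show "\<exists>\<chi> d. m_pair e w \<chi> d \<and> m_nat e d \<and>
      ((\<exists>t1 t2. (isEqF e \<chi> t1 t2 \<or> isMemF e \<chi> t1 t2)) \<and> m_empty e d
     \<or> (\<exists>\<theta> d'. isNeg e \<chi> \<theta> \<and> inRel2 e RD \<theta> d' \<and> m_succ e d d')
     \<or> (\<exists>\<theta>1 \<theta>2 d1 d2 u. isOr e \<chi> \<theta>1 \<theta>2 \<and> inRel2 e RD \<theta>1 d1 \<and> inRel2 e RD \<theta>2 d2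
            \<and> m_union2 e u d1 d2 \<and> m_succ e d u)
     \<or> (\<exists>i \<theta> d'. isEx e \<chi> i \<theta> \<and> inRel2 e RD \<theta> d' \<and> m_succ e d d'))"
      apply (rule exI[of _ \<phi>], rule exI[of _ z], intro conjI disjI1)
      using c q nz z a\<phi>' by blast+
  qed
  then have "hasDepth e \<phi> z" unfolding hasDepth_def inRel2_def using RD q by blast
  moreover
  obtain p0 where p0: "m_pair e p0 z a" using pair_ex by blast
  obtain p1 where p1: "m_pair e p1 o1 b" using pair_ex by blast
  obtain g where g: "m_upair e g p0 p1" using ax_pair by blast
  have gc: "\<And>w. e w g \<longleftrightarrow> w = p0 \<or> w = p1" using g unfolding m_upair_def by blast
  have ag: "isAssign e g"
    unfolding isAssign_def
  proof (intro conjI allI impI)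
    fix w assume "e w g" then show "\<exists>i a. m_nat e i \<and> m_pair e w i a" using gc[of w] p0 p1 nz no by metis
  next
    fix i c d w w' assume h: "m_pair e w i c \<and> m_pair e w' i d \<and> e w g \<and> e w' g"
    then show "c = d" using gc p0 p1 pair_inj zo by metis
  qed
  moreover
  have ts1: "tsubst e g v0 ta" unfolding tsubst_def using iv0 p0 gc ta by blast
  have ts2: "tsubst e g v1 tb" unfolding tsubst_def using iv1 p1 gc tb by blast
  obtain q' where q': "m_triple e q' g \<phi> p" using triple_ex by blast
  obtain RS where RS: "\<forall>w. e w RS \<longleftrightarrow> w = q'" using sing_ex by blast
  have "atomk k \<phi> v0 v1 \<and> atomk k p ta tb" using a\<phi> p by blast
  then have "(isEqF e \<phi> v0 v1 \<and> isEqF e p ta tb) \<or> (isMemF e \<phi> v0 v1 \<and> isMemF e p ta tb)"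
    using k unfolding atomk_def isEqF_def isMemF_def by auto
  then have "subst_closed e RS" unfolding subst_closed_def
  proof (intro allI impI)
    assume K: "(isEqF e \<phi> v0 v1 \<and> isEqF e p ta tb) \<or> (isMemF e \<phi> v0 v1 \<and> isMemF e p ta tb)"
    fix w assume "e w RS"
    then have c: "w = q'" using RS by blast
    show "\<exists>g \<chi> \<chi>'. m_triple e w g \<chi> \<chi>' \<and> isAssign e g \<and>
      ((\<exists>t1 t2 s1 s2. isEqF e \<chi> t1 t2 \<and> tsubst e g t1 s1 \<and> tsubst e g t2 s2 \<and> isEqF e \<chi>' s1 s2)
     \<or> (\<exists>t1 t2 s1 s2. isMemF e \<chi> t1 t2 \<and> tsubst e g t1 s1 \<and> tsubst e g t2 s2 \<and> isMemF e \<chi>' s1 s2)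
     \<or> (\<exists>\<theta> \<theta>'. isNeg e \<chi> \<theta> \<and> isNeg e \<chi>' \<theta>' \<and> inRel3 e RS g \<theta> \<theta>')
     \<or> (\<exists>\<theta>1 \<theta>2 \<theta>1' \<theta>2'. isOr e \<chi> \<theta>1 \<theta>2 \<and> isOr e \<chi>' \<theta>1' \<theta>2'
            \<and> inRel3 e RS g \<theta>1 \<theta>1' \<and> inRel3 e RS g \<theta>2 \<theta>2')
     \<or> (\<exists>i \<theta> \<theta>' g'. isEx e \<chi> i \<theta> \<and> isEx e \<chi>' i \<theta>' \<and> m_remove e g' g i
            \<and> inRel3 e RS g' \<theta> \<theta>'))"
      apply (rule exI[of _ g], rule exI[of _ \<phi>], rule exI[of _ p], intro conjI)
      using c q' apply blast
      using ag apply blast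
      using K apply (elim disjE)
       apply (rule disjI1) using ts1 ts2 apply blast
      apply (rule disjI2, rule disjI1) using ts1 ts2 apply blast
      done
  qed
  then have "ssubst e g \<phi> p" unfolding ssubst_def inRel3_def using RS q' by blast
  ultimately show ?thesis using z by blast
qed

lemma atom_closed_k:
  assumes k: "k \<in> {2,3}" and ta: "isConst e ta a" and tb: "isConst e tb b" and p: "atomk k p ta tb"
  shows "LPclosed e p"
proof -
  have p': "isEqF e p ta tb \<or> isMemF e p ta tb" using atomk_iff[OF k p] .
  have it: "isTerm e ta" "isTerm e tb" using ta tb unfolding isTerm_def by blast+
  obtain S where S: "\<forall>w. e w S \<longleftrightarrow> w = p" using sing_ex by blast
  have "form_closed e (isTerm e) S" unfolding form_closed_def
  proof (intro allI impI, rule disjI1)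
    fix \<chi> assume "e \<chi> S"
    then have c: "\<chi> = p" using S by blast
    show "\<exists>t1 t2. (isEqF e \<chi> t1 t2 \<or> isMemF e \<chi> t1 t2) \<and> isTerm e t1 \<and> isTerm e t2"
      using c p' it by blast
  qed
  then have "LPformula e p" unfolding LPformula_def using S by blast
  moreover have "notFree e i p" for i
  proof -
    have nv: "\<not> isVar e ta i" "\<not> isVar e tb i" using ta tb distinct_syn0 by blast+
    have "notfree_closed e i S" unfolding notfree_closed_def
    proof (intro allI impI, rule disjI1)
      fix \<chi> assume "e \<chi> S"
      then have c: "\<chi> = p" using S by blast
      show "\<exists>t1 t2. (isEqF e \<chi> t1 t2 \<or> isMemF e \<chi> t1 t2) \<and> \<not> isVar e t1 i \<and> \<not> isVar e t2 i"
        using c p' nv by blast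
    qed
    then show ?thesis unfolding notFree_def using S by blast
  qed
  ultimately show ?thesis unfolding LPclosed_def by blast
qed

lemma atom_FSent:
  assumes k: "m_nat e n" and ta: "isConst e ta a" and tb: "isConst e tb b"
    and p: "isEqF e p ta tb \<or> isMemF e p ta tb"
  shows "p \<in> FSent e (DepthF e n)"
proof -
  obtain k where k: "k \<in> {2,3}" "atomk k p ta tb" using atomk_cases[OF p] by blast
  obtain \<phi> g z where r: "LZFformula e \<phi>" "isAssign e g" "ssubst e g \<phi> p" "hasDepth e \<phi> z" "m_empty e z"
    using atom_rep_k[OF k(1) ta tb k(2)] by blast
  have "m_le e z n" using zero_le[OF assms(1) r(5)] .
  then have "\<phi> \<in> DepthF e n" unfolding DepthF_def using r by blast
  then show ?thesis unfolding FSent_def using r atom_closed_k[OF k(1) ta tb k(2)] by blast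
qed

end

context gbm begin

definition rep :: "'a \<Rightarrow> 'a \<Rightarrow> 'a \<Rightarrow> bool" where
  "rep \<phi> g x \<equiv> LZFformula e \<phi> \<and> isAssign e g \<and> ssubst e g \<phi> x"

lemma FSentD_iff: "x \<in> FSent e (DepthF e n) \<longleftrightarrow> LPclosed e x \<and> (\<exists>\<phi> g d. rep \<phi> g x \<and> hasDepth e \<phi> d \<and> m_le e d n)"
  unfolding FSent_def DepthF_def rep_def by blast

lemma FSent_mono: "F \<subseteq> F' \<Longrightarrow> FSent e F \<subseteq> FSent e F'"
  unfolding FSent_def by blast

lemma DepthF_mono: "m_nat e p \<Longrightarrow> m_le e d p \<Longrightarrow> DepthF e d \<subseteq> DepthF e p"
  unfolding DepthF_def using le_mem unfolding m_le_def by blast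

abbreviation TC :: "'a \<Rightarrow> 'a set \<Rightarrow> bool" where "TC n T \<equiv> truth_class e (DepthF e n) T"

lemma tc_sub: "TC n T \<Longrightarrow> x \<in> T \<Longrightarrow> x \<in> FSent e (DepthF e n)"
  unfolding truth_class_def by blast
lemma tc_eq: assumes "TC n T" "isConst e ta a" "isConst e tb b" "isEqF e p ta tb" shows "p \<in> T \<longleftrightarrow> a = b"
  using assms(1)[unfolded truth_class_def, THEN conjunct2, THEN conjunct1, rule_format, OF conjI[OF assms(2) conjI[OF assms(3) assms(4)]]] .
lemma tc_mem: assumes "TC n T" "isConst e ta a" "isConst e tb b" "isMemF e p ta tb" shows "p \<in> T \<longleftrightarrow> e a b"
  using assms(1)[unfolded truth_class_def, THEN conjunct2, THEN conjunct2, THEN conjunct1, rule_format, OF conjI[OF assms(2) conjI[OF assms(3) assms(4)]]] .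
lemma tc_neg: assumes "TC n T" "x \<in> FSent e (DepthF e n)" "isNeg e x \<psi>" shows "x \<in> T \<longleftrightarrow> \<psi> \<notin> T"
  using assms(1)[unfolded truth_class_def, THEN conjunct2, THEN conjunct2, THEN conjunct2, THEN conjunct1, rule_format, OF conjI[OF assms(2) assms(3)]] .
lemma tc_or: assumes "TC n T" "x \<in> FSent e (DepthF e n)" "isOr e x \<psi>1 \<psi>2" shows "x \<in> T \<longleftrightarrow> \<psi>1 \<in> T \<or> \<psi>2 \<in> T"
  using assms(1)[unfolded truth_class_def, THEN conjunct2, THEN conjunct2, THEN conjunct2, THEN conjunct2, THEN conjunct1, rule_format, OF conjI[OF assms(2) assms(3)]] .
lemma tc_ex: assumes "TC n T" "x \<in> FSent e (DepthF e n)" "isEx e x i \<psi>"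
  shows "x \<in> T \<longleftrightarrow> (\<exists>a g y. isSingAssign e g i a \<and> ssubst e g \<psi> y \<and> y \<in> T)"
  using assms(1)[unfolded truth_class_def, THEN conjunct2, THEN conjunct2, THEN conjunct2, THEN conjunct2, THEN conjunct2, rule_format, OF conjI[OF assms(2) assms(3)]] .

lemma neg_rep: "rep \<phi> g x \<Longrightarrow> hasDepth e \<phi> d \<Longrightarrow> isNeg e x \<psi> \<Longrightarrow>
   \<exists>\<theta> d'. rep \<theta> g \<psi> \<and> hasDepth e \<theta> d' \<and> m_succ e d d'"
proof -
  assume a: "rep \<phi> g x" "hasDepth e \<phi> d" "isNeg e x \<psi>"
  obtain \<theta> where t: "isNeg e \<phi> \<theta>" "ssubst e g \<theta> \<psi>" using SS_neg a unfolding rep_def by blast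
  obtain d' where "hasDepth e \<theta> d'" "m_succ e d d'" using HD_neg[OF a(2) t(1)] by blast
  moreover have "LZFformula e \<theta>" using LZF_neg t(1) a(1) unfolding rep_def by blast
  ultimately show ?thesis using t a(1) unfolding rep_def by blast
qed

lemma or_rep: "rep \<phi> g x \<Longrightarrow> hasDepth e \<phi> d \<Longrightarrow> isOr e x \<psi>1 \<psi>2 \<Longrightarrow>
   \<exists>\<theta>1 \<theta>2 d1 d2 u. rep \<theta>1 g \<psi>1 \<and> rep \<theta>2 g \<psi>2 \<and> hasDepth e \<theta>1 d1 \<and> hasDepth e \<theta>2 d2
      \<and> m_union2 e u d1 d2 \<and> m_succ e d u"
proof -
  assume a: "rep \<phi> g x" "hasDepth e \<phi> d" "isOr e x \<psi>1 \<psi>2"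
  obtain \<theta>1 \<theta>2 where t: "isOr e \<phi> \<theta>1 \<theta>2" "ssubst e g \<theta>1 \<psi>1" "ssubst e g \<theta>2 \<psi>2"
    using SS_or a unfolding rep_def by blast
  obtain d1 d2 u where "hasDepth e \<theta>1 d1" "hasDepth e \<theta>2 d2" "m_union2 e u d1 d2" "m_succ e d u"
    using HD_or[OF a(2) t(1)] by blast
  moreover have "LZFformula e \<theta>1 \<and> LZFformula e \<theta>2" using LZF_or t(1) a(1) unfolding rep_def by blast
  ultimately show ?thesis using t a(1) unfolding rep_def by blast
qed

lemma ddisj_sing: "m_remove e g' g i \<Longrightarrow> isSingAssign e h i a \<Longrightarrow> ddisj g' h"
  unfolding m_remove_def isSingAssign_def ddisj_def using pair_inj by metis

lemma ex_rep: "rep \<phi> g x \<Longrightarrow> hasDepth e \<phi> d \<Longrightarrow> isEx e x i \<psi> \<Longrightarrow> isSingAssign e h i a \<Longrightarrow> ssubst e h \<psi> y \<Longrightarrow>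
   \<exists>\<theta> g'' d'. rep \<theta> g'' y \<and> hasDepth e \<theta> d' \<and> m_succ e d d'"
proof -
  assume a: "rep \<phi> g x" "hasDepth e \<phi> d" "isEx e x i \<psi>" "isSingAssign e h i a" "ssubst e h \<psi> y"
  obtain \<theta> g' where t: "isEx e \<phi> i \<theta>" "m_remove e g' g i" "ssubst e g' \<theta> \<psi>"
    using SS_ex a unfolding rep_def by blast
  obtain g'' where u: "m_union2 e g'' g' h" using union2_ex by blast
  have s: "ssubst e g'' \<theta> y" using ss_comp[OF t(3) a(5) ddisj_sing[OF t(2) a(4)] u] .
  obtain d' where "hasDepth e \<theta> d'" "m_succ e d d'" using HD_ex[OF a(2) t(1)] by blast
  moreover have "LZFformula e \<theta>" using LZF_ex t(1) a(1) unfolding rep_def by blast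
  ultimately show ?thesis using s SS_assign[OF s] unfolding rep_def by blast
qed

lemma FS_neg: "m_nat e n \<Longrightarrow> x \<in> FSent e (DepthF e n) \<Longrightarrow> isNeg e x \<psi> \<Longrightarrow> \<psi> \<in> FSent e (DepthF e n)"
proof -
  assume n: "m_nat e n" and x: "x \<in> FSent e (DepthF e n)" and a: "isNeg e x \<psi>"
  obtain \<phi> g d where r: "LPclosed e x" "rep \<phi> g x" "hasDepth e \<phi> d" "m_le e d n" using x FSentD_iff by blast
  obtain \<theta> d' where t: "rep \<theta> g \<psi>" "hasDepth e \<theta> d'" "m_succ e d d'" using neg_rep[OF r(2,3) a] by blast
  have "e d' n" using succ_le[OF n r(4) t(3)] .
  then have "m_le e d' n" unfolding m_le_def by blast
  then show ?thesis unfolding FSentD_iff using t CL_neg[OF r(1) a] by blast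
qed

lemma FS_or: "m_nat e n \<Longrightarrow> x \<in> FSent e (DepthF e n) \<Longrightarrow> isOr e x \<psi>1 \<psi>2 \<Longrightarrow>
   \<psi>1 \<in> FSent e (DepthF e n) \<and> \<psi>2 \<in> FSent e (DepthF e n)"
proof -
  assume n: "m_nat e n" and x: "x \<in> FSent e (DepthF e n)" and a: "isOr e x \<psi>1 \<psi>2"
  obtain \<phi> g d where r: "LPclosed e x" "rep \<phi> g x" "hasDepth e \<phi> d" "m_le e d n" using x FSentD_iff by blast
  obtain \<theta>1 \<theta>2 d1 d2 u where t: "rep \<theta>1 g \<psi>1" "rep \<theta>2 g \<psi>2" "hasDepth e \<theta>1 d1" "hasDepth e \<theta>2 d2"
      "m_union2 e u d1 d2" "m_succ e d u" using or_rep[OF r(2,3) a] by blast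
  have "e d1 n \<and> e d2 n" using union_le[OF n r(4) t(6) t(5) HD_nat[OF t(3)] HD_nat[OF t(4)]] .
  then have "m_le e d1 n" "m_le e d2 n" unfolding m_le_def by blast+
  then show ?thesis unfolding FSentD_iff using t CL_or[OF r(1) a] by blast
qed

lemma FS_ex: "m_nat e n \<Longrightarrow> x \<in> FSent e (DepthF e n) \<Longrightarrow> isEx e x i \<psi> \<Longrightarrow> isSingAssign e h i a \<Longrightarrow>
   ssubst e h \<psi> y \<Longrightarrow> LPclosed e y \<Longrightarrow> y \<in> FSent e (DepthF e n)"
proof -
  assume n: "m_nat e n" and x: "x \<in> FSent e (DepthF e n)" and a: "isEx e x i \<psi>" "isSingAssign e h i a"
    "ssubst e h \<psi> y" and cy: "LPclosed e y"
  obtain \<phi> g d where r: "LPclosed e x" "rep \<phi> g x" "hasDepth e \<phi> d" "m_le e d n" using x FSentD_iff by blast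
  obtain \<theta> g'' d' where t: "rep \<theta> g'' y" "hasDepth e \<theta> d'" "m_succ e d d'" using ex_rep[OF r(2,3) a] by blast
  have "e d' n" using succ_le[OF n r(4) t(3)] .
  then have "m_le e d' n" unfolding m_le_def by blast
  then show ?thesis unfolding FSentD_iff using t cy by blast
qed

end

context gbm begin

lemma Def_rep: "Def e Cl (\<lambda>s. rep (s i) (s j) (s k))"
  unfolding rep_def by (intro Def_basic Def_LZFformula Def_isAssign Def_ssubst)

lemma succ_mem: "m_succ e d d' \<Longrightarrow> e d' d" unfolding m_succ_def by blast

lemma agree_core:
  assumes p: "m_nat e p" and q: "m_nat e q" and TCl: "T \<in> Cl" and T'Cl: "T' \<in> Cl"
    and TT: "TC p T" and TT': "TC q T'"
  shows "\<forall>n. m_le e n p \<longrightarrow> (\<forall>x \<phi>1 g1 \<phi>2 g2 d2. LPclosed e x \<and> rep \<phi>1 g1 x \<and> hasDepth e \<phi>1 n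
      \<and> rep \<phi>2 g2 x \<and> hasDepth e \<phi>2 d2 \<and> m_le e d2 q \<longrightarrow> (x \<in> T \<longleftrightarrow> x \<in> T'))"
proof -
  define G where "G = (\<lambda>n q. \<forall>x \<phi>1 g1 \<phi>2 g2 d2. LPclosed e x \<and> rep \<phi>1 g1 x \<and> hasDepth e \<phi>1 n
      \<and> rep \<phi>2 g2 x \<and> hasDepth e \<phi>2 d2 \<and> m_le e d2 q \<longrightarrow> (x \<in> T \<longleftrightarrow> x \<in> T'))"
  have "Def e Cl (\<lambda>s. G (s 0) (s 1))" unfolding G_def
    by (intro Def_basic Def_LPclosed Def_rep Def_hasDepth Def_le TCl T'Cl)
  then have Gcl: "{n. G n q} \<in> Cl" by (rule cl2)
  obtain K where K: "m_succ e K p" using succ_ex by blast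
  have Kc: "\<And>z. e z K \<longleftrightarrow> m_le e z p" using K unfolding m_succ_def m_le_def by blast
  have trK: "\<forall>n' n. e n' n \<and> e n K \<longrightarrow> e n' K" using Kc le_mem[OF p] unfolding m_le_def by blast
  have main: "n \<in> {n. G n q}" if "e n K" for n
    using Gcl trK _ that
  proof (rule ind_set)
    fix n assume nK: "e n K" and IH: "\<forall>n'. e n' n \<longrightarrow> n' \<in> {n. G n q}"
    have np: "m_le e n p" using nK Kc by blast
    have IH': "\<And>n'. e n' n \<Longrightarrow> G n' q" using IH by blast
    show "n \<in> {n. G n q}" unfolding mem_Collect_eq G_def
    proof (intro allI impI, elim conjE)
      fix x \<phi>1 g1 \<phi>2 g2 d2
      assume cx: "LPclosed e x" and r1: "rep \<phi>1 g1 x" and h1: "hasDepth e \<phi>1 n"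
        and r2: "rep \<phi>2 g2 x" and h2: "hasDepth e \<phi>2 d2" and d2q: "m_le e d2 q"
      have nn: "m_nat e n" using HD_nat[OF h1] .
      have xp: "x \<in> FSent e (DepthF e p)" unfolding FSentD_iff using cx r1 h1 np by blast
      have xq: "x \<in> FSent e (DepthF e q)" unfolding FSentD_iff using cx r2 h2 d2q by blast
      have "LPformula e x" using cx unfolding LPclosed_def by blast
      from LP_cases[OF this] show "x \<in> T \<longleftrightarrow> x \<in> T'"
      proof (elim disjE exE conjE)
        fix t1 t2 assume at0: "isEqF e x t1 t2"
        then have at: "isEqF e x t1 t2 \<or> isMemF e x t1 t2" by blast
        obtain a b where ab: "isConst e t1 a" "isConst e t2 b" using CL_atom[OF cx at] by blast
        show ?thesis using at0 tc_eq[OF TT ab] tc_eq[OF TT' ab] by simp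
      next
        fix t1 t2 assume at0: "isMemF e x t1 t2"
        then have at: "isEqF e x t1 t2 \<or> isMemF e x t1 t2" by blast
        obtain a b where ab: "isConst e t1 a" "isConst e t2 b" using CL_atom[OF cx at] by blast
        show ?thesis using at0 tc_mem[OF TT ab] tc_mem[OF TT' ab] by simp
      next
        fix \<psi> assume a: "isNeg e x \<psi>"
        obtain \<theta>1 d1 where s1: "rep \<theta>1 g1 \<psi>" "hasDepth e \<theta>1 d1" "m_succ e n d1" using neg_rep[OF r1 h1 a] by blast
        obtain \<theta>2 e2 where s2: "rep \<theta>2 g2 \<psi>" "hasDepth e \<theta>2 e2" "m_succ e d2 e2" using neg_rep[OF r2 h2 a] by blast
        have "e e2 q" using succ_le[OF q d2q s2(3)] .
        then have "m_le e e2 q" unfolding m_le_def by blast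
        moreover have "G d1 q" using IH' succ_mem[OF s1(3)] by blast
        ultimately have "\<psi> \<in> T \<longleftrightarrow> \<psi> \<in> T'" unfolding G_def using CL_neg[OF cx a] s1 s2 by blast
        then show ?thesis using tc_neg[OF TT xp a] tc_neg[OF TT' xq a] by simp
      next
        fix \<psi>1 \<psi>2 assume a: "isOr e x \<psi>1 \<psi>2"
        obtain \<theta>1 \<theta>1' d1 d1' u where s1: "rep \<theta>1 g1 \<psi>1" "rep \<theta>1' g1 \<psi>2" "hasDepth e \<theta>1 d1" "hasDepth e \<theta>1' d1'"
          "m_union2 e u d1 d1'" "m_succ e n u" using or_rep[OF r1 h1 a] by blast
        obtain \<theta>2 \<theta>2' f1 f1' u' where s2: "rep \<theta>2 g2 \<psi>1" "rep \<theta>2' g2 \<psi>2" "hasDepth e \<theta>2 f1" "hasDepth e \<theta>2' f1'"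
          "m_union2 e u' f1 f1'" "m_succ e d2 u'" using or_rep[OF r2 h2 a] by blast
        have "e d1 n \<and> e d1' n" using union_le[OF nn le_refl s1(6) s1(5) HD_nat[OF s1(3)] HD_nat[OF s1(4)]] .
        then have G1: "G d1 q" "G d1' q" using IH' by blast+
        have "e f1 q \<and> e f1' q" using union_le[OF q d2q s2(6) s2(5) HD_nat[OF s2(3)] HD_nat[OF s2(4)]] .
        then have "m_le e f1 q" "m_le e f1' q" unfolding m_le_def by blast+
        then have "\<psi>1 \<in> T \<longleftrightarrow> \<psi>1 \<in> T'" "\<psi>2 \<in> T \<longleftrightarrow> \<psi>2 \<in> T'"
          using G1 CL_or[OF cx a] s1 s2 unfolding G_def by blast+
        then show ?thesis using tc_or[OF TT xp a] tc_or[OF TT' xq a] by simp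
      next
        fix i \<psi> assume a: "isEx e x i \<psi>"
        have step: "y \<in> T \<longleftrightarrow> y \<in> T'" if sg: "isSingAssign e h i c" "ssubst e h \<psi> y" and cy: "LPclosed e y" for h c y
        proof -
          obtain \<theta>1 g1' d1 where s1: "rep \<theta>1 g1' y" "hasDepth e \<theta>1 d1" "m_succ e n d1"
            using ex_rep[OF r1 h1 a sg] by blast
          obtain \<theta>2 g2' f1 where s2: "rep \<theta>2 g2' y" "hasDepth e \<theta>2 f1" "m_succ e d2 f1"
            using ex_rep[OF r2 h2 a sg] by blast
          have "e f1 q" using succ_le[OF q d2q s2(3)] .
          then have "m_le e f1 q" unfolding m_le_def by blast
          moreover have "G d1 q" using IH' succ_mem[OF s1(3)] by blast
          ultimately show ?thesis unfolding G_def using cy s1 s2 by blast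
        qed
        have "(\<exists>c h y. isSingAssign e h i c \<and> ssubst e h \<psi> y \<and> y \<in> T) \<longleftrightarrow>
              (\<exists>c h y. isSingAssign e h i c \<and> ssubst e h \<psi> y \<and> y \<in> T')"
        proof
          assume "\<exists>c h y. isSingAssign e h i c \<and> ssubst e h \<psi> y \<and> y \<in> T"
          then obtain c h y where "isSingAssign e h i c" "ssubst e h \<psi> y" "y \<in> T" by blast
          moreover then have "LPclosed e y" using tc_sub[OF TT] unfolding FSentD_iff by blast
          ultimately show "\<exists>c h y. isSingAssign e h i c \<and> ssubst e h \<psi> y \<and> y \<in> T'" using step by blast
        next
          assume "\<exists>c h y. isSingAssign e h i c \<and> ssubst e h \<psi> y \<and> y \<in> T'"
          then obtain c h y where "isSingAssign e h i c" "ssubst e h \<psi> y" "y \<in> T'" by blast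
          moreover then have "LPclosed e y" using tc_sub[OF TT'] unfolding FSentD_iff by blast
          ultimately show "\<exists>c h y. isSingAssign e h i c \<and> ssubst e h \<psi> y \<and> y \<in> T" using step by blast
        qed
        then show ?thesis using tc_ex[OF TT xp a] tc_ex[OF TT' xq a] by simp
      qed
    qed
  qed
  show ?thesis
  proof (rule allI, rule impI)
    fix n assume "m_le e n p"
    then have "e n K" using Kc by blast
    then have "G n q" using main by blast
    then show "\<forall>x \<phi>1 g1 \<phi>2 g2 d2. LPclosed e x \<and> rep \<phi>1 g1 x \<and> hasDepth e \<phi>1 n
      \<and> rep \<phi>2 g2 x \<and> hasDepth e \<phi>2 d2 \<and> m_le e d2 q \<longrightarrow> (x \<in> T \<longleftrightarrow> x \<in> T')"
      by (simp add: G_def)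
  qed
qed

lemma agree:
  assumes p: "m_nat e p" and q: "m_nat e q" and TCl: "T \<in> Cl" and T'Cl: "T' \<in> Cl"
    and TT: "TC p T" and TT': "TC q T'"
    and xp: "x \<in> FSent e (DepthF e p)" and xq: "x \<in> FSent e (DepthF e q)"
  shows "x \<in> T \<longleftrightarrow> x \<in> T'"
proof -
  obtain \<phi>1 g1 n where r1: "LPclosed e x" "rep \<phi>1 g1 x" "hasDepth e \<phi>1 n" "m_le e n p" using xp FSentD_iff by blast
  obtain \<phi>2 g2 d2 where r2: "rep \<phi>2 g2 x" "hasDepth e \<phi>2 d2" "m_le e d2 q" using xq FSentD_iff by blast
  show ?thesis using agree_core[OF assms(1-6)] r1 r2 by blast
qed

end

context gbm begin

lemma nat_le: "m_nat e p \<Longrightarrow> m_le e d p \<Longrightarrow> m_nat e d"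
  unfolding m_le_def using nat_elem by blast

lemma restrict:
  assumes p: "m_nat e p" and TCl: "T \<in> Cl" and TT: "TC p T" and dp: "m_le e d p"
  shows "\<exists>T'\<in>Cl. TC d T'"
proof -
  have dn: "m_nat e d" using nat_le[OF p dp] .
  have "Def e Cl (\<lambda>s. s 0 \<in> T \<and> s 0 \<in> FSent e (DepthF e (s 1)))"
    by (intro Def_basic Def_FSentD TCl)
  then have T'cl: "{x. x \<in> T \<and> x \<in> FSent e (DepthF e d)} \<in> Cl" by (rule cl2)
  define T' where "T' = {x. x \<in> T \<and> x \<in> FSent e (DepthF e d)}"
  have sub: "FSent e (DepthF e d) \<subseteq> FSent e (DepthF e p)" using FSent_mono[OF DepthF_mono[OF p dp]] .
  have "TC d T'" unfolding truth_class_def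
  proof (intro conjI allI impI)
    show "T' \<subseteq> FSent e (DepthF e d)" unfolding T'_def by blast
  next
    fix a b q ta tb assume h: "isConst e ta a \<and> isConst e tb b \<and> isEqF e q ta tb"
    then have "q \<in> FSent e (DepthF e d)" using atom_FSent[OF dn] by blast
    then show "q \<in> T' \<longleftrightarrow> a = b" unfolding T'_def using tc_eq[OF TT] h by blast
  next
    fix a b q ta tb assume h: "isConst e ta a \<and> isConst e tb b \<and> isMemF e q ta tb"
    then have "q \<in> FSent e (DepthF e d)" using atom_FSent[OF dn] by blast
    then show "q \<in> T' \<longleftrightarrow> e a b" unfolding T'_def using tc_mem[OF TT] h by blast
  next
    fix x \<psi> assume h: "x \<in> FSent e (DepthF e d) \<and> isNeg e x \<psi>"
    have "\<psi> \<in> FSent e (DepthF e d)" using FS_neg[OF dn] h by blast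
    moreover have "x \<in> T \<longleftrightarrow> \<psi> \<notin> T" using tc_neg[OF TT] h sub by blast
    ultimately show "x \<in> T' \<longleftrightarrow> \<psi> \<notin> T'" unfolding T'_def using h by blast
  next
    fix x \<psi>1 \<psi>2 assume h: "x \<in> FSent e (DepthF e d) \<and> isOr e x \<psi>1 \<psi>2"
    have "\<psi>1 \<in> FSent e (DepthF e d) \<and> \<psi>2 \<in> FSent e (DepthF e d)" using FS_or[OF dn] h by blast
    moreover have "x \<in> T \<longleftrightarrow> \<psi>1 \<in> T \<or> \<psi>2 \<in> T" using tc_or[OF TT] h sub by blast
    ultimately show "x \<in> T' \<longleftrightarrow> \<psi>1 \<in> T' \<or> \<psi>2 \<in> T'" unfolding T'_def using h by blast
  next
    fix x i \<psi> assume h: "x \<in> FSent e (DepthF e d) \<and> isEx e x i \<psi>"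
    have eq: "x \<in> T \<longleftrightarrow> (\<exists>a g y. isSingAssign e g i a \<and> ssubst e g \<psi> y \<and> y \<in> T)"
      using tc_ex[OF TT] h sub by blast
    have yin: "y \<in> FSent e (DepthF e d)" if sg: "isSingAssign e g i a" and gs: "ssubst e g \<psi> y" and yT: "y \<in> T" for g a y
    proof -
      have "LPclosed e y" using tc_sub[OF TT yT] unfolding FSentD_iff by blast
      then show ?thesis using FS_ex[OF dn _ _ sg gs] h by blast
    qed
    show "x \<in> T' \<longleftrightarrow> (\<exists>a g y. isSingAssign e g i a \<and> ssubst e g \<psi> y \<and> y \<in> T')"
      unfolding T'_def using eq yin h by blast
  qed
  then show ?thesis using T'cl unfolding T'_def by blast
qed

lemma nonatomic_depth:
  assumes "rep \<phi> g x" "hasDepth e \<phi> d" "isNeg e x \<psi> \<or> isOr e x \<psi>1 \<psi>2 \<or> isEx e x i \<psi>"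
  shows "\<exists>w. e w d"
  using assms(3)
proof (elim disjE)
  assume "isNeg e x \<psi>" then show ?thesis using neg_rep[OF assms(1,2)] succ_mem by blast
next
  assume "isOr e x \<psi>1 \<psi>2" then show ?thesis using or_rep[OF assms(1,2)] succ_mem by blast
next
  assume a: "isEx e x i \<psi>"
  obtain \<theta> g' where t: "isEx e \<phi> i \<theta>" using SS_ex a assms(1) unfolding rep_def by blast
  then show ?thesis using HD_ex[OF assms(2) t] succ_mem by blast
qed

lemma depth0_class: "\<exists>z T. m_nat e z \<and> T \<in> Cl \<and> TC z T"
proof -
  obtain z where z: "m_empty e z" using empty_ex by blast
  have zn: "m_nat e z" using nat_empty[OF z] .
  define P where "P = (\<lambda>x. (\<exists>a ta tb. isConst e ta a \<and> isConst e tb a \<and> isEqF e x ta tb) \<or>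
     (\<exists>a b ta tb. isConst e ta a \<and> isConst e tb b \<and> isMemF e x ta tb \<and> e a b))"
  have "Def e Cl (\<lambda>s. P (s 0))" unfolding P_def by (intro Def_basic Def_syn0)
  then have Tcl: "{x. P x} \<in> Cl" by (rule cl1)
  have nonat: False if xin: "x \<in> FSent e (DepthF e z)" and nA: "isNeg e x \<psi> \<or> isOr e x \<psi>1 \<psi>2 \<or> isEx e x i \<psi>" for x \<psi> \<psi>1 \<psi>2 i
  proof -
    obtain \<phi> g d where r: "rep \<phi> g x" "hasDepth e \<phi> d" "m_le e d z" using xin FSentD_iff by blast
    obtain w where "e w d" using nonatomic_depth[OF r(1,2) nA] by blast
    then show False using r(3) z le_mem[OF zn] unfolding m_empty_def by blast
  qed
  have "TC z {x. P x}" unfolding truth_class_def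
  proof (intro conjI allI impI)
    show "{x. P x} \<subseteq> FSent e (DepthF e z)"
    proof
      fix x assume "x \<in> {x. P x}"
      then have "\<exists>ta tb a b. isConst e ta a \<and> isConst e tb b \<and> (isEqF e x ta tb \<or> isMemF e x ta tb)"
        unfolding P_def by blast
      then show "x \<in> FSent e (DepthF e z)" using atom_FSent[OF zn] by blast
    qed
  next
    fix a b q ta tb assume h: "isConst e ta a \<and> isConst e tb b \<and> isEqF e q ta tb"
    show "q \<in> {x. P x} \<longleftrightarrow> a = b"
    proof
      assume "q \<in> {x. P x}"
      then show "a = b" unfolding P_def mem_Collect_eq using h inj_syn distinct_syn by metis
    next
      assume "a = b" then show "q \<in> {x. P x}" unfolding P_def using h by blast
    qed
  next
    fix a b q ta tb assume h: "isConst e ta a \<and> isConst e tb b \<and> isMemF e q ta tb"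
    show "q \<in> {x. P x} \<longleftrightarrow> e a b"
    proof
      assume "q \<in> {x. P x}"
      then show "e a b" unfolding P_def mem_Collect_eq using h inj_syn distinct_syn by metis
    next
      assume "e a b" then show "q \<in> {x. P x}" unfolding P_def using h by blast
    qed
  next
    fix x \<psi> assume "x \<in> FSent e (DepthF e z) \<and> isNeg e x \<psi>"
    then show "x \<in> {x. P x} \<longleftrightarrow> \<psi> \<notin> {x. P x}" using nonat by blast
  next
    fix x \<psi>1 \<psi>2 assume "x \<in> FSent e (DepthF e z) \<and> isOr e x \<psi>1 \<psi>2"
    then show "x \<in> {x. P x} \<longleftrightarrow> \<psi>1 \<in> {x. P x} \<or> \<psi>2 \<in> {x. P x}" using nonat by blast
  next
    fix x i \<psi> assume "x \<in> FSent e (DepthF e z) \<and> isEx e x i \<psi>"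
    then show "x \<in> {x. P x} \<longleftrightarrow> (\<exists>a g y. isSingAssign e g i a \<and> ssubst e g \<psi> y \<and> y \<in> {x. P x})"
      using nonat by blast
  qed
  then show ?thesis using zn Tcl by blast
qed

lemma TM_intro: "m_nat e p \<Longrightarrow> T \<in> Cl \<Longrightarrow> TC p T \<Longrightarrow> x \<in> T \<Longrightarrow> T_Most e Cl x"
proof -
  assume p: "m_nat e p" and TCl: "T \<in> Cl" and TT: "TC p T" and xT: "x \<in> T"
  have xp: "x \<in> FSent e (DepthF e p)" using tc_sub[OF TT xT] .
  then obtain \<phi> g d where r: "rep \<phi> g x" "hasDepth e \<phi> d" "m_le e d p" using FSentD_iff by blast
  have "DepthF e p \<subseteq> {\<phi>. LZFformula e \<phi>}" unfolding DepthF_def by blast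
  then have "x \<in> LPsentence e" unfolding LPsentence_def using FSent_mono xp by blast
  then show ?thesis unfolding T_Most_def using r p TCl TT xT unfolding rep_def by blast
qed

lemma TM_elim: "T_Most e Cl x \<Longrightarrow> \<exists>p T. m_nat e p \<and> T \<in> Cl \<and> TC p T \<and> x \<in> T"
  unfolding T_Most_def by blast

lemma DM_elim: "x \<in> FSent e (Depth_Most e Cl) \<Longrightarrow> \<exists>d T. m_nat e d \<and> T \<in> Cl \<and> TC d T \<and> x \<in> FSent e (DepthF e d)"
proof -
  assume "x \<in> FSent e (Depth_Most e Cl)"
  then obtain \<phi> g d where h: "LPclosed e x" "LZFformula e \<phi>" "isAssign e g" "ssubst e g \<phi> x"
    "hasDepth e \<phi> d" "d \<in> C_Most e Cl" unfolding FSent_def Depth_Most_def by blast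
  then obtain T where T: "m_nat e d" "T \<in> Cl" "TC d T" unfolding C_Most_def by blast
  have "x \<in> FSent e (DepthF e d)" unfolding FSentD_iff rep_def using h le_refl by blast
  then show ?thesis using T by blast
qed

lemma TM_sub: "T_Most e Cl x \<Longrightarrow> x \<in> FSent e (Depth_Most e Cl)"
proof -
  assume "T_Most e Cl x"
  then obtain p T where pT: "m_nat e p" "T \<in> Cl" "TC p T" "x \<in> T" using TM_elim by blast
  have "x \<in> FSent e (DepthF e p)" using tc_sub[OF pT(3,4)] .
  then obtain \<phi> g d where r: "LPclosed e x" "rep \<phi> g x" "hasDepth e \<phi> d" "m_le e d p" using FSentD_iff by blast
  obtain T' where "T' \<in> Cl" "TC d T'" using restrict[OF pT(1,2,3) r(4)] by blast
  then have "d \<in> C_Most e Cl" unfolding C_Most_def using HD_nat[OF r(3)] by blast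
  then have "\<phi> \<in> Depth_Most e Cl" unfolding Depth_Most_def using r unfolding rep_def by blast
  then show ?thesis unfolding FSent_def using r unfolding rep_def by blast
qed

lemma main: "truth_class e (Depth_Most e Cl) {x. T_Most e Cl x}"
  unfolding truth_class_def
proof (intro conjI allI impI)
  show "{x. T_Most e Cl x} \<subseteq> FSent e (Depth_Most e Cl)" using TM_sub by blast
next
  fix a b q ta tb assume h: "isConst e ta a \<and> isConst e tb b \<and> isEqF e q ta tb"
  show "q \<in> {x. T_Most e Cl x} \<longleftrightarrow> a = b"
  proof
    assume "q \<in> {x. T_Most e Cl x}"
    then obtain p T where "m_nat e p" "T \<in> Cl" "TC p T" "q \<in> T" using TM_elim by blast
    then show "a = b" using tc_eq h by blast
  next
    assume ab: "a = b"
    obtain z T where zT: "m_nat e z" "T \<in> Cl" "TC z T" using depth0_class by blast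
    then have "q \<in> T" using tc_eq h ab by blast
    then show "q \<in> {x. T_Most e Cl x}" using TM_intro zT by blast
  qed
next
  fix a b q ta tb assume h: "isConst e ta a \<and> isConst e tb b \<and> isMemF e q ta tb"
  show "q \<in> {x. T_Most e Cl x} \<longleftrightarrow> e a b"
  proof
    assume "q \<in> {x. T_Most e Cl x}"
    then obtain p T where "m_nat e p" "T \<in> Cl" "TC p T" "q \<in> T" using TM_elim by blast
    then show "e a b" using tc_mem h by blast
  next
    assume ab: "e a b"
    obtain z T where zT: "m_nat e z" "T \<in> Cl" "TC z T" using depth0_class by blast
    then have "q \<in> T" using tc_mem h ab by blast
    then show "q \<in> {x. T_Most e Cl x}" using TM_intro zT by blast
  qed
next
  fix x \<psi> assume h: "x \<in> FSent e (Depth_Most e Cl) \<and> isNeg e x \<psi>"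
  obtain d Td where D: "m_nat e d" "Td \<in> Cl" "TC d Td" "x \<in> FSent e (DepthF e d)" using DM_elim h by blast
  show "x \<in> {x. T_Most e Cl x} \<longleftrightarrow> \<psi> \<notin> {x. T_Most e Cl x}"
  proof
    assume "x \<in> {x. T_Most e Cl x}"
    then obtain p T where P: "m_nat e p" "T \<in> Cl" "TC p T" "x \<in> T" using TM_elim by blast
    have xp: "x \<in> FSent e (DepthF e p)" using tc_sub[OF P(3,4)] .
    show "\<psi> \<notin> {x. T_Most e Cl x}"
    proof
      assume "\<psi> \<in> {x. T_Most e Cl x}"
      then obtain q T' where Q: "m_nat e q" "T' \<in> Cl" "TC q T'" "\<psi> \<in> T'" using TM_elim by blast
      have "\<psi> \<in> FSent e (DepthF e p)" using FS_neg[OF P(1) xp] h by blast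
      then have "\<psi> \<in> T" using agree[OF P(1) Q(1) P(2) Q(2) P(3) Q(3) _ tc_sub[OF Q(3,4)]] Q(4) by blast
      then show False using tc_neg[OF P(3) xp] h P(4) by blast
    qed
  next
    assume n: "\<psi> \<notin> {x. T_Most e Cl x}"
    have "\<psi> \<notin> Td" using TM_intro[OF D(1,2,3)] n by blast
    then have "x \<in> Td" using tc_neg[OF D(3,4)] h by blast
    then show "x \<in> {x. T_Most e Cl x}" using TM_intro[OF D(1,2,3)] by blast
  qed
next
  fix x \<psi>1 \<psi>2 assume h: "x \<in> FSent e (Depth_Most e Cl) \<and> isOr e x \<psi>1 \<psi>2"
  obtain d Td where D: "m_nat e d" "Td \<in> Cl" "TC d Td" "x \<in> FSent e (DepthF e d)" using DM_elim h by blast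
  show "x \<in> {x. T_Most e Cl x} \<longleftrightarrow> \<psi>1 \<in> {x. T_Most e Cl x} \<or> \<psi>2 \<in> {x. T_Most e Cl x}"
  proof
    assume "x \<in> {x. T_Most e Cl x}"
    then obtain p T where P: "m_nat e p" "T \<in> Cl" "TC p T" "x \<in> T" using TM_elim by blast
    have xp: "x \<in> FSent e (DepthF e p)" using tc_sub[OF P(3,4)] .
    have "\<psi>1 \<in> T \<or> \<psi>2 \<in> T" using tc_or[OF P(3) xp] h P(4) by blast
    then show "\<psi>1 \<in> {x. T_Most e Cl x} \<or> \<psi>2 \<in> {x. T_Most e Cl x}" using TM_intro[OF P(1,2,3)] by blast
  next
    have sd: "\<psi>1 \<in> FSent e (DepthF e d) \<and> \<psi>2 \<in> FSent e (DepthF e d)" using FS_or[OF D(1,4)] h by blast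
    have inTd: "\<psi> \<in> Td" if "\<psi> \<in> {x. T_Most e Cl x}" "\<psi> \<in> FSent e (DepthF e d)" for \<psi>
    proof -
      obtain q T' where Q: "m_nat e q" "T' \<in> Cl" "TC q T'" "\<psi> \<in> T'" using TM_elim \<open>\<psi> \<in> {x. T_Most e Cl x}\<close> by blast
      show "\<psi> \<in> Td" using agree[OF D(1) Q(1) D(2) Q(2) D(3) Q(3) \<open>\<psi> \<in> FSent e (DepthF e d)\<close> tc_sub[OF Q(3,4)]] Q(4) by blast
    qed
    assume "\<psi>1 \<in> {x. T_Most e Cl x} \<or> \<psi>2 \<in> {x. T_Most e Cl x}"
    then have "\<psi>1 \<in> Td \<or> \<psi>2 \<in> Td" using inTd sd by blast
    then have "x \<in> Td" using tc_or[OF D(3,4)] h by blast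
    then show "x \<in> {x. T_Most e Cl x}" using TM_intro[OF D(1,2,3)] by blast
  qed
next
  fix x i \<psi> assume h: "x \<in> FSent e (Depth_Most e Cl) \<and> isEx e x i \<psi>"
  obtain d Td where D: "m_nat e d" "Td \<in> Cl" "TC d Td" "x \<in> FSent e (DepthF e d)" using DM_elim h by blast
  show "x \<in> {x. T_Most e Cl x} \<longleftrightarrow> (\<exists>a g y. isSingAssign e g i a \<and> ssubst e g \<psi> y \<and> y \<in> {x. T_Most e Cl x})"
  proof
    assume "x \<in> {x. T_Most e Cl x}"
    then obtain p T where P: "m_nat e p" "T \<in> Cl" "TC p T" "x \<in> T" using TM_elim by blast
    have xp: "x \<in> FSent e (DepthF e p)" using tc_sub[OF P(3,4)] .
    have "\<exists>a g y. isSingAssign e g i a \<and> ssubst e g \<psi> y \<and> y \<in> T" using tc_ex[OF P(3) xp] h P(4) by blast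
    then show "\<exists>a g y. isSingAssign e g i a \<and> ssubst e g \<psi> y \<and> y \<in> {x. T_Most e Cl x}"
      using TM_intro[OF P(1,2,3)] by blast
  next
    assume "\<exists>a g y. isSingAssign e g i a \<and> ssubst e g \<psi> y \<and> y \<in> {x. T_Most e Cl x}"
    then obtain a g y where y: "isSingAssign e g i a" "ssubst e g \<psi> y" "T_Most e Cl y" by blast
    obtain q T' where Q: "m_nat e q" "T' \<in> Cl" "TC q T'" "y \<in> T'" using TM_elim y(3) by blast
    have yq: "y \<in> FSent e (DepthF e q)" using tc_sub[OF Q(3,4)] .
    then have "LPclosed e y" unfolding FSentD_iff by blast
    then have "y \<in> FSent e (DepthF e d)" using FS_ex[OF D(1,4) _ y(1,2)] h by blast
    then have "y \<in> Td" using agree[OF D(1) Q(1) D(2) Q(2) D(3) Q(3) _ yq] Q(4) by blast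
    then have "x \<in> Td" using tc_ex[OF D(3,4)] h y(1,2) by blast
    then show "x \<in> {x. T_Most e Cl x}" using TM_intro[OF D(1,2,3)] by blast
  qed
qed

end

theorem theorem3p4:
  fixes e :: "'a \<Rightarrow> 'a \<Rightarrow> bool" and Cl :: "'a set set"
  assumes "GB_plus_inf e Cl \<or> GB_minus_inf e Cl"
  shows "truth_class e (Depth_Most e Cl) {x. T_Most e Cl x}"
proof -
  have "GB_common e Cl" using assms unfolding GB_plus_inf_def GB_minus_inf_def by blast
  then interpret gbm e Cl by unfold_locales
  show ?thesis by (rule main)
qed

end
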